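(* Let $(\mathrm{A},\mathrm{A}',(\mathcal{S}_\tau)_{\tau\in\mathbb{R}},u)$ be a collision model and let $\sigma\in\mathsf{St}_1(\mathrm{A}')$ be any reference state. For $\tau\in\mathbb{R}$ put $\mathcal{C}_{\tau,\sigma}:=(\mathcal{I}_{\mathrm{A}}\otimes u)\circ\mathcal{S}_\tau\circ(\mathcal{I}_{\mathrm{A}}\otimes\sigma)\in\mathsf{Transf}(\mathrm{A}\to\mathrm{A})$ and $\mathcal{U}_{t,\sigma}:=\lim_{n\to\infty}(\mathcal{C}_{t/n,\sigma})^n$. Then for every $t$ the limit exists, $(\mathcal{U}_{t,\sigma})_{t\in\mathbb{R}}$ is a one-parameter subgroup of the Lie group $\mathsf{G}_{\mathrm{A}}$ of reversible transformations of $\mathrm{A}$, and $\mathcal{U}_{t,\sigma}=e^{G_\sigma t}$, where $G_\sigma:=(\mathcal{I}_{\mathrm{A}}\otimes u)\,\frac{\mathrm d\mathcal{S}_\tau}{\mathrm d\tau}\big|_{\tau=0}\,(\mathcal{I}_{\mathrm{A}}\otimes\sigma)$, i.e. $G_\sigma(\rho)=(\mathcal{I}_{\mathrm{A}}\otimes u)\frac{\mathrm d\mathcal{S}_\tau}{\mathrm d\tau}\big|_{\tau=0}(\rho\otimes\sigma)$.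
   Context: Setting: an operational probabilistic theory (OPT). There is a collection of systems, closed under a composition $\otimes$, with a trivial system $\mathrm{I}$ satisfying $\mathrm{A}\otimes\mathrm{I}=\mathrm{I}\otimes\mathrm{A}=\mathrm{A}$. For systems $\mathrm{A},\mathrm{B}$ there is a set $\mathsf{Transf}(\mathrm{A}\to\mathrm{B})$ of transformations, closed under sequential composition $\circ$ and parallel composition $\otimes$, containing identities $\mathcal{I}_{\mathrm{A}}$. Tests are finite collections of transformations (experiments with outcomes); the set of tests is closed under parallel/sequential composition and coarse-graining (summing transformations over a partition of outcomes). A transformation is deterministic if it forms a single-outcome test. States are $\mathsf{St}(\mathrm{A})=\mathsf{Transf}(\mathrm{I}\to\mathrm{A})$, effects $\mathsf{Eff}(\mathrm{A})=\mathsf{Transf}(\mathrm{A}\to\mathrm{I})$, and $\mathsf{St}_1,\mathsf{Eff}_1$ denote the deterministic ones; transformations $\mathrm{I}\to\mathrm{I}$ are identified with probabilities, and two transformations are identified if they give the same probabilities in all circuits. Each $\mathcal{T}\in\mathsf{Transf}(\mathrm{A}\to\mathrm{B})$ is identified with the family of linear maps induced by $\mathcal{T}\otimes\mathcal{I}_{\mathrm{E}}$ from $\mathsf{St}_{\mathbb{R}}(\mathrm{A}\otimes\mathrm{E})$ to $\mathsf{St}_{\mathbb{R}}(\mathrm{B}\otimes\mathrm{E})$ over all systems $\mathrm{E}$ ($\mathsf{St}_{\mathbb{R}}$ = real span of states), and these span a real vector space $\mathsf{Transf}_{\mathbb{R}}(\mathrm{A}\to\mathrm{B})$. Standing assumption: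 each $\mathsf{Transf}_{\mathbb{R}}(\mathrm{A}\to\mathrm{B})$ is finite-dimensional and $\mathsf{Transf}(\mathrm{A}\to\mathrm{B})$ is convex and closed in the operational norm (for states $\|\xi\|=\sup_{a\in\mathsf{Eff}}a(\xi)-\inf_{b\in\mathsf{Eff}}b(\xi)$; for transformations $\|\mathcal{T}\|_{op}=\sup_{\mathrm{E}}\sup_{\rho\in\mathsf{St}(\mathrm{A}\otimes\mathrm{E}),\|\rho\|\neq0}\|(\mathcal{T}\otimes\mathcal{I}_{\mathrm{E}})\rho\|/\|\rho\|$). A transformation is reversible if it has a two-sided inverse transformation; the reversible transformations $\mathrm{A}\to\mathrm{A}$ form a group $\mathsf{G}_{\mathrm{A}}$, which under these assumptions is a compact Lie group with a faithful finite-dimensional matrix representation, so derivatives of one-parameter subgroups are well-defined; $\mathfrak{g}_{\mathrm{A}}$ is its Lie algebra. A collision model is a tuple $(\mathrm{A},\mathrm{A}',(\mathcal{S}_\tau)_{\tau\in\mathbb{R}},u)$ with systems $\mathrm{A}$ (target) and $\mathrm{A}'$ (reference), a one-parameter subgroup $(\mathcal{S}_\tau)$ of $\mathsf{G}_{\mathrm{A}\otimes\mathrm{A}'}$, and a deterministic effect $u\in\mathsf{Eff}_1(\mathrm{A}')$. *)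

theory Defs
  imports "HOL-Analysis.Analysis"
begin

text \<open>All transformations (of all systems) live in one ambient
  real normed vector space 't; transf Th A B is the set Transf(A -> B), and its real
  span is Transf_R(A -> B).  seq is sequential composition (seq S T = S o T),
  par is parallel composition, ident A is the identity on A.
  Tests are finite lists of transformations (outcomes indexed by list position).\<close>

record ('s, 't) opt =
  tens  :: "'s \<Rightarrow> 's \<Rightarrow> 's"
  triv  :: 's
  transf :: "'s \<Rightarrow> 's \<Rightarrow> 't set"
  tests :: "'s \<Rightarrow> 's \<Rightarrow> 't list set"
  seq   :: "'t \<Rightarrow> 't \<Rightarrow> 't"
  par   :: "'t \<Rightarrow> 't \<Rightarrow> 't"
  ident :: "'s \<Rightarrow> 't"

definition det :: "('s, 't) opt \<Rightarrow> 's \<Rightarrow> 's \<Rightarrow> 't set" where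
  "det Th A B = {T. [T] \<in> tests Th A B}"

definition opt_axioms :: "('s, 't::real_normed_vector) opt \<Rightarrow> bool" where
  "opt_axioms Th \<longleftrightarrow>
     \<comment> \<open>trivial system\<close>
     (\<forall>A. tens Th A (triv Th) = A \<and> tens Th (triv Th) A = A) \<and>
     \<comment> \<open>closure of transformations, identities, category laws\<close>
     (\<forall>A. ident Th A \<in> transf Th A A) \<and>
     (\<forall>A B C T S. T \<in> transf Th A B \<longrightarrow> S \<in> transf Th B C \<longrightarrow> seq Th S T \<in> transf Th A C) \<and>
     (\<forall>A B C D T S. T \<in> transf Th A B \<longrightarrow> S \<in> transf Th C D \<longrightarrow>
          par Th T S \<in> transf Th (tens Th A C) (tens Th B D)) \<and>
     (\<forall>A B T. T \<in> transf Th A B \<longrightarrow> seq Th (ident Th B) T = T \<and> seq Th T (ident Th A) = T) \<and>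
     (\<forall>A B C D R S T. T \<in> transf Th A B \<longrightarrow> S \<in> transf Th B C \<longrightarrow> R \<in> transf Th C D \<longrightarrow>
          seq Th R (seq Th S T) = seq Th (seq Th R S) T) \<and>
     (\<forall>A B. par Th (ident Th A) (ident Th B) = ident Th (tens Th A B)) \<and>
     (\<forall>A B C A' B' C' T T' S S'. T \<in> transf Th A B \<longrightarrow> S \<in> transf Th B C \<longrightarrow>
          T' \<in> transf Th A' B' \<longrightarrow> S' \<in> transf Th B' C' \<longrightarrow>
          par Th (seq Th S T) (seq Th S' T') = seq Th (par Th S S') (par Th T T')) \<and>
     (\<forall>A B T. T \<in> transf Th A B \<longrightarrow>
          par Th T (ident Th (triv Th)) = T \<and> par Th (ident Th (triv Th)) T = T) \<and>
     \<comment> \<open>linear extension of the compositions\<close>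
     bilinear (seq Th) \<and> bilinear (par Th) \<and>
     \<comment> \<open>transformations I -> I are the probabilities\<close>
     ident Th (triv Th) \<noteq> 0 \<and>
     transf Th (triv Th) (triv Th) = {p *\<^sub>R ident Th (triv Th) | p. 0 \<le> p \<and> p \<le> 1} \<and>
     \<comment> \<open>tests: finite collections of transformations\<close>
     (\<forall>A B. transf Th A B = (\<Union>xs\<in>tests Th A B. set xs)) \<and>
     (\<forall>A B xs. xs \<in> tests Th A B \<longrightarrow> xs \<noteq> [] \<and> set xs \<subseteq> transf Th A B) \<and>
     (\<forall>xs. xs \<in> tests Th (triv Th) (triv Th) \<longrightarrow> sum_list xs = ident Th (triv Th)) \<and>
     (\<forall>A B C xs ys. xs \<in> tests Th A B \<longrightarrow> ys \<in> tests Th B C \<longrightarrow>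
          [seq Th y x. x \<leftarrow> xs, y \<leftarrow> ys] \<in> tests Th A C) \<and>
     (\<forall>A B C D xs ys. xs \<in> tests Th A B \<longrightarrow> ys \<in> tests Th C D \<longrightarrow>
          [par Th x y. x \<leftarrow> xs, y \<leftarrow> ys] \<in> tests Th (tens Th A C) (tens Th B D)) \<and>
     (\<forall>A B xs k g. xs \<in> tests Th A B \<longrightarrow> 0 < k \<longrightarrow> (\<forall>i<length xs. g i < k) \<longrightarrow>
          map (\<lambda>j. \<Sum>i\<in>{i. i < length xs \<and> g i = j}. xs ! i) [0..<k] \<in> tests Th A B) \<and>
     \<comment> \<open>standing assumptions: finite dimension, convexity, closedness\<close>
     (\<forall>A B. \<exists>F. finite F \<and> transf Th A B \<subseteq> span F) \<and>
     (\<forall>A B. convex (transf Th A B)) \<and>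
     (\<forall>A B. closed (transf Th A B))"

definition rev_group :: "('s, 't) opt \<Rightarrow> 's \<Rightarrow> 't set" where
  "rev_group Th A = {T \<in> transf Th A A. \<exists>S \<in> transf Th A A.
                        seq Th S T = ident Th A \<and> seq Th T S = ident Th A}"

definition one_param_subgroup :: "('s, 't::real_normed_vector) opt \<Rightarrow> 's \<Rightarrow> (real \<Rightarrow> 't) \<Rightarrow> bool" where
  "one_param_subgroup Th A U \<longleftrightarrow>
     (\<forall>t. U t \<in> rev_group Th A) \<and> (\<forall>s t. U (s + t) = seq Th (U s) (U t)) \<and> continuous_on UNIV U"

definition collision_model ::
  "('s, 't::real_normed_vector) opt \<Rightarrow> 's \<Rightarrow> 's \<Rightarrow> (real \<Rightarrow> 't) \<Rightarrow> 't \<Rightarrow> bool" where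
  "collision_model Th A A' S u \<longleftrightarrow>
     one_param_subgroup Th (tens Th A A') S \<and> u \<in> det Th A' (triv Th)"

primrec opow :: "('s, 't) opt \<Rightarrow> 's \<Rightarrow> 't \<Rightarrow> nat \<Rightarrow> 't" where
  "opow Th A X 0 = ident Th A"
| "opow Th A X (Suc n) = seq Th X (opow Th A X n)"

definition opt_exp :: "('s, 't::real_normed_vector) opt \<Rightarrow> 's \<Rightarrow> 't \<Rightarrow> 't" where
  "opt_exp Th A X = (\<Sum>n. (1 / fact n) *\<^sub>R opow Th A X n)"

definition collision_channel ::
  "('s, 't) opt \<Rightarrow> 's \<Rightarrow> (real \<Rightarrow> 't) \<Rightarrow> 't \<Rightarrow> 't \<Rightarrow> real \<Rightarrow> 't" where
  "collision_channel Th A S u \<sigma> \<tau> =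
     seq Th (par Th (ident Th A) u) (seq Th (S \<tau>) (par Th (ident Th A) \<sigma>))"

definition collision_generator ::
  "('s, 't::real_normed_vector) opt \<Rightarrow> 's \<Rightarrow> (real \<Rightarrow> 't) \<Rightarrow> 't \<Rightarrow> 't \<Rightarrow> 't" where
  "collision_generator Th A S u \<sigma> =
     seq Th (par Th (ident Th A) u) (seq Th (vector_derivative S (at 0)) (par Th (ident Th A) \<sigma>))"

end

theory Submission imports Defs begin


lemma Cauchy_lip:
  fixes f :: "nat \<Rightarrow> 'a::metric_space" and g :: "nat \<Rightarrow> 'b::metric_space"
  assumes "Cauchy f" "\<And>m n. dist (g m) (g n) \<le> L * dist (f m) (f n)"
  shows "Cauchy g"
proof (rule metric_CauchyI)
  fix e :: real assume e: "0 < e"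
  define L' where "L' = max L 1"
  have L': "L' > 0" "L \<le> L'" by (auto simp: L'_def)
  obtain M where M: "\<forall>m\<ge>M. \<forall>n\<ge>M. dist (f m) (f n) < e / L'"
    using metric_CauchyD[OF assms(1), of "e/L'"] e L' by auto
  show "\<exists>M. \<forall>m\<ge>M. \<forall>n\<ge>M. dist (g m) (g n) < e"
  proof (intro exI allI impI)
    fix m n assume "M \<le> m" "M \<le> n"
    then have d: "dist (f m) (f n) < e / L'" using M by auto
    have "L * dist (f m) (f n) \<le> L' * dist (f m) (f n)" by (rule mult_right_mono[OF L'(2) zero_le_dist])
    then have "dist (g m) (g n) \<le> L' * dist (f m) (f n)"
      using assms(2)[of m n] by linarith
    also have "\<dots> < e" using d L' by (simp add: pos_less_divide_eq mult.commute)
    finally show "dist (g m) (g n) < e" .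
  qed
qed

lemma complete_zero: "complete {0::'a::real_normed_vector}"
proof (rule completeI)
  fix f :: "nat \<Rightarrow> 'a" assume "\<forall>n. f n \<in> {0}"
  then have "f = (\<lambda>n. 0)" by auto
  then show "\<exists>l\<in>{0}. f \<longlonglongrightarrow> l" by auto
qed

lemma fin_span_coords:
  fixes F :: "'a::real_normed_vector set"
  assumes "finite F"
  shows "complete (span F) \<and> (\<exists>C\<ge>0. \<forall>x\<in>span F. \<exists>c. x = (\<Sum>v\<in>F. c v *\<^sub>R v) \<and> (\<forall>v\<in>F. \<bar>c v\<bar> \<le> C * norm x))"
  using assms
proof (induction F rule: finite_induct)
  case empty
  show ?case using complete_zero by (auto intro!: exI[of _ 0])
next
  case (insert v F)
  from insert.IH obtain C where C: "C \<ge> 0"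
    "\<forall>x\<in>span F. \<exists>c. x = (\<Sum>u\<in>F. c u *\<^sub>R u) \<and> (\<forall>u\<in>F. \<bar>c u\<bar> \<le> C * norm x)"
    and cF: "complete (span F)" by blast
  show ?case
  proof (cases "v \<in> span F")
    case True
    then have sp: "span (insert v F) = span F" by (rule span_redundant)
    have "\<forall>x\<in>span (insert v F). \<exists>c. x = (\<Sum>u\<in>insert v F. c u *\<^sub>R u) \<and> (\<forall>u\<in>insert v F. \<bar>c u\<bar> \<le> C * norm x)"
    proof
      fix x assume "x \<in> span (insert v F)"
      then obtain c where c: "x = (\<Sum>u\<in>F. c u *\<^sub>R u)" "\<forall>u\<in>F. \<bar>c u\<bar> \<le> C * norm x"
        using C sp by auto
      have "(\<Sum>u\<in>insert v F. (c(v := 0)) u *\<^sub>R u) = (\<Sum>u\<in>F. (c(v := 0)) u *\<^sub>R u)"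
        using insert.hyps by simp
      also have "\<dots> = (\<Sum>u\<in>F. c u *\<^sub>R u)" using insert.hyps by (intro sum.cong) auto
      finally show "\<exists>c. x = (\<Sum>u\<in>insert v F. c u *\<^sub>R u) \<and> (\<forall>u\<in>insert v F. \<bar>c u\<bar> \<le> C * norm x)"
        using c C(1) insert.hyps by (intro exI[of _ "c(v := 0)"]) auto
    qed
    with cF sp C(1) show ?thesis by auto
  next
    case False
    have clF: "closed (span F)" by (rule complete_imp_closed[OF cF])
    define \<delta> where "\<delta> = infdist v (span F)"
    have \<delta>: "\<delta> > 0" using infdist_pos_not_in_closed[OF clF _ False] span_zero unfolding \<delta>_def by blast
    have key: "\<bar>a\<bar> * \<delta> \<le> norm (a *\<^sub>R v + w)" if w: "w \<in> span F" for a w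
    proof (cases "a = 0")
      case True then show ?thesis by simp
    next
      case False
      have "\<delta> \<le> dist v ((- (1/a)) *\<^sub>R w)" unfolding \<delta>_def
        by (rule infdist_le) (rule span_scale[OF w])
      also have "dist v ((- (1/a)) *\<^sub>R w) = norm (v + (1/a) *\<^sub>R w)" by (simp add: dist_norm)
      finally have "\<bar>a\<bar> * \<delta> \<le> \<bar>a\<bar> * norm (v + (1/a) *\<^sub>R w)" by (rule mult_left_mono) auto
      also have "\<dots> = norm (a *\<^sub>R (v + (1/a) *\<^sub>R w))" by simp
      also have "a *\<^sub>R (v + (1/a) *\<^sub>R w) = a *\<^sub>R v + w" using False by (simp add: algebra_simps)
      finally show ?thesis .
    qed
    have decomp: "\<exists>a. x - a *\<^sub>R v \<in> span F" if "x \<in> span (insert v F)" for x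
      using that span_breakdown_eq by blast
    define C' where "C' = 1/\<delta> + C * (1 + norm v / \<delta>)"
    have coords: "\<forall>x\<in>span (insert v F). \<exists>c. x = (\<Sum>u\<in>insert v F. c u *\<^sub>R u) \<and> (\<forall>u\<in>insert v F. \<bar>c u\<bar> \<le> C' * norm x)"
    proof
      fix x assume x: "x \<in> span (insert v F)"
      obtain a where w: "x - a *\<^sub>R v \<in> span F" using decomp x by blast
      define w where "w = x - a *\<^sub>R v"
      have xa: "x = a *\<^sub>R v + w" by (simp add: w_def)
      have "\<bar>a\<bar> * \<delta> \<le> norm x" using key[OF w, of a] by simp
      then have ha: "\<bar>a\<bar> \<le> norm x / \<delta>" using \<delta> by (simp add: pos_le_divide_eq)
      have "norm w \<le> norm x + norm (a *\<^sub>R v)" unfolding w_def by (rule norm_triangle_ineq4)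
      also have "\<dots> \<le> norm x + norm x / \<delta> * norm v" using mult_right_mono[OF ha norm_ge_zero, of v] by simp
      also have "\<dots> = norm x * (1 + norm v / \<delta>)" by (simp add: algebra_simps)
      finally have hw: "norm w \<le> norm x * (1 + norm v / \<delta>)" .
      obtain c where c: "w = (\<Sum>u\<in>F. c u *\<^sub>R u)" "\<forall>u\<in>F. \<bar>c u\<bar> \<le> C * norm w"
        using C(2) w unfolding w_def by blast
      have "(\<Sum>u\<in>insert v F. (c(v := a)) u *\<^sub>R u) = a *\<^sub>R v + (\<Sum>u\<in>F. (c(v := a)) u *\<^sub>R u)"
        using insert.hyps by simp
      also have "(\<Sum>u\<in>F. (c(v := a)) u *\<^sub>R u) = (\<Sum>u\<in>F. c u *\<^sub>R u)"
        using insert.hyps by (intro sum.cong) auto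
      finally have sum_eq: "x = (\<Sum>u\<in>insert v F. (c(v := a)) u *\<^sub>R u)" using xa c(1) by simp
      have nn: "0 \<le> C * (1 + norm v / \<delta>) * norm x" using C(1) \<delta> by simp
      have b1: "\<bar>a\<bar> \<le> C' * norm x" using ha nn by (simp add: C'_def algebra_simps)
      have b2: "\<bar>c u\<bar> \<le> C' * norm x" if "u \<in> F" for u
      proof -
        have "\<bar>c u\<bar> \<le> C * norm w" using c(2) that by blast
        also have "\<dots> \<le> C * (norm x * (1 + norm v / \<delta>))" using hw C(1) by (rule mult_left_mono)
        also have "\<dots> \<le> C' * norm x" using \<delta> by (simp add: C'_def algebra_simps)
        finally show ?thesis .
      qed
      show "\<exists>c. x = (\<Sum>u\<in>insert v F. c u *\<^sub>R u) \<and> (\<forall>u\<in>insert v F. \<bar>c u\<bar> \<le> C' * norm x)"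
        using sum_eq b1 b2 insert.hyps by (intro exI[of _ "c(v := a)"]) auto
    qed
    have C'0: "C' \<ge> 0" using C(1) \<delta> by (simp add: C'_def)
    have "complete (span (insert v F))"
    proof (rule completeI)
      fix f assume f: "\<forall>n. f n \<in> span (insert v F)" "Cauchy f"
      have "\<forall>n. \<exists>a. f n - a *\<^sub>R v \<in> span F" using f(1) decomp by blast
      then obtain a where a: "\<And>n. f n - a n *\<^sub>R v \<in> span F" by metis
      define w where "w n = f n - a n *\<^sub>R v" for n
      have wF: "w n \<in> span F" for n using a by (simp add: w_def)
      have fd: "f m - f n = (a m - a n) *\<^sub>R v + (w m - w n)" for m n
        by (simp add: w_def algebra_simps)
      have da: "dist (a m) (a n) \<le> (1/\<delta>) * dist (f m) (f n)" for m n
      proof -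
        have "\<bar>a m - a n\<bar> * \<delta> \<le> norm (f m - f n)" using key[OF span_diff[OF wF wF]] fd by simp
        then show ?thesis using \<delta> by (simp add: dist_norm dist_real_def field_simps)
      qed
      have Ca: "Cauchy a" by (rule Cauchy_lip[OF f(2) da])
      then obtain \<alpha> where a\<alpha>: "a \<longlonglongrightarrow> \<alpha>" using Cauchy_convergent_iff convergent_def by blast
      have dw: "dist (w m) (w n) \<le> (1 + norm v / \<delta>) * dist (f m) (f n)" for m n
      proof -
        have "w m - w n = (f m - f n) - (a m - a n) *\<^sub>R v" by (simp add: w_def algebra_simps)
        then have "norm (w m - w n) \<le> norm (f m - f n) + norm ((a m - a n) *\<^sub>R v)"
          by (simp only:) (rule norm_triangle_ineq4)
        then have "norm (w m - w n) \<le> norm (f m - f n) + \<bar>a m - a n\<bar> * norm v" by simp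
        also have "\<bar>a m - a n\<bar> * norm v \<le> (1/\<delta>) * dist (f m) (f n) * norm v"
          by (rule mult_right_mono[OF _ norm_ge_zero]) (use da[of m n] in \<open>simp add: dist_real_def\<close>)
        finally show ?thesis by (simp add: dist_norm algebra_simps)
      qed
      have Cw: "Cauchy w" by (rule Cauchy_lip[OF f(2) dw])
      obtain \<omega> where \<omega>: "\<omega> \<in> span F" "w \<longlonglongrightarrow> \<omega>" using completeE[OF cF _ Cw] wF by blast
      have "(\<lambda>n. a n *\<^sub>R v + w n) \<longlonglongrightarrow> \<alpha> *\<^sub>R v + \<omega>"
        by (intro tendsto_intros a\<alpha> \<omega>(2))
      moreover have "(\<lambda>n. a n *\<^sub>R v + w n) = f" by (auto simp: w_def)
      moreover have "\<alpha> *\<^sub>R v + \<omega> \<in> span (insert v F)"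
      proof -
        have "\<alpha> *\<^sub>R v \<in> span (insert v F)" by (intro span_scale span_base) simp
        moreover have "\<omega> \<in> span (insert v F)" using span_mono[of F "insert v F"] \<omega>(1) by blast
        ultimately show ?thesis by (rule span_add)
      qed
      ultimately show "\<exists>l\<in>span (insert v F). f \<longlonglongrightarrow> l" by auto
    qed
    with coords C'0 show ?thesis by blast
  qed
qed

lemma fin_linear_bound:
  fixes F :: "'a::real_normed_vector set" and f :: "'a \<Rightarrow> 'b::real_normed_vector"
  assumes "finite F" "linear f"
  shows "\<exists>K\<ge>0. \<forall>x\<in>span F. norm (f x) \<le> K * norm x"
proof -
  obtain C where C: "C \<ge> 0" "\<forall>x\<in>span F. \<exists>c. x = (\<Sum>v\<in>F. c v *\<^sub>R v) \<and> (\<forall>v\<in>F. \<bar>c v\<bar> \<le> C * norm x)"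
    using fin_span_coords[OF assms(1)] by blast
  define K where "K = C * (\<Sum>v\<in>F. norm (f v))"
  show ?thesis
  proof (intro exI[of _ K] conjI ballI)
    show "K \<ge> 0" using C by (simp add: K_def sum_nonneg)
    fix x assume "x \<in> span F"
    then obtain c where c: "x = (\<Sum>v\<in>F. c v *\<^sub>R v)" "\<forall>v\<in>F. \<bar>c v\<bar> \<le> C * norm x" using C by blast
    have "f x = (\<Sum>v\<in>F. c v *\<^sub>R f v)" by (simp add: c(1) linear_sum[OF assms(2)] linear_scale[OF assms(2)])
    then have "norm (f x) \<le> (\<Sum>v\<in>F. norm (c v *\<^sub>R f v))" by (simp only:) (rule norm_sum)
    then have "norm (f x) \<le> (\<Sum>v\<in>F. \<bar>c v\<bar> * norm (f v))" by simp
    also have "\<dots> \<le> (\<Sum>v\<in>F. C * norm x * norm (f v))" by (intro sum_mono mult_right_mono) (use c in auto)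
    also have "\<dots> = K * norm x" by (simp add: K_def sum_distrib_left sum_distrib_right mult_ac)
    finally show "norm (f x) \<le> K * norm x" .
  qed
qed

lemma fin_bilinear_bound:
  fixes F :: "'a::real_normed_vector set" and h :: "'a \<Rightarrow> 'a \<Rightarrow> 'b::real_normed_vector"
  assumes "finite F" "bilinear h"
  shows "\<exists>K>0. \<forall>x\<in>span F. \<forall>y\<in>span F. norm (h x y) \<le> K * norm x * norm y"
proof -
  obtain C where C: "C \<ge> 0" "\<forall>x\<in>span F. \<exists>c. x = (\<Sum>v\<in>F. c v *\<^sub>R v) \<and> (\<forall>v\<in>F. \<bar>c v\<bar> \<le> C * norm x)"
    using fin_span_coords[OF assms(1)] by blast
  have "\<forall>v\<in>F. \<exists>K\<ge>0. \<forall>y\<in>span F. norm (h v y) \<le> K * norm y"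
    using fin_linear_bound[OF assms(1)] assms(2) unfolding bilinear_def by blast
  then obtain Kf where Kf: "\<And>v. v \<in> F \<Longrightarrow> Kf v \<ge> 0" "\<And>v y. v \<in> F \<Longrightarrow> y \<in> span F \<Longrightarrow> norm (h v y) \<le> Kf v * norm y"
    by metis
  define K where "K = C * (\<Sum>v\<in>F. Kf v) + 1"
  have K0: "K > 0" using C(1) Kf(1) by (simp add: K_def sum_nonneg add_nonneg_pos)
  have lin: "linear (\<lambda>x. h x y)" for y using assms(2) unfolding bilinear_def by blast
  show ?thesis
  proof (intro exI[of _ K] conjI ballI K0)
    fix x y assume x: "x \<in> span F" and y: "y \<in> span F"
    then obtain c where c: "x = (\<Sum>v\<in>F. c v *\<^sub>R v)" "\<forall>v\<in>F. \<bar>c v\<bar> \<le> C * norm x" using C by blast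
    have "h x y = (\<Sum>v\<in>F. c v *\<^sub>R h v y)" by (simp add: c(1) linear_sum[OF lin] linear_scale[OF lin])
    then have "norm (h x y) \<le> (\<Sum>v\<in>F. norm (c v *\<^sub>R h v y))" by (simp only:) (rule norm_sum)
    then have "norm (h x y) \<le> (\<Sum>v\<in>F. \<bar>c v\<bar> * norm (h v y))" by simp
    also have "\<dots> \<le> (\<Sum>v\<in>F. (C * norm x) * (Kf v * norm y))"
      by (intro sum_mono mult_mono) (use c Kf y in auto)
    also have "\<dots> = C * (\<Sum>v\<in>F. Kf v) * norm x * norm y" by (simp add: sum_distrib_left sum_distrib_right mult_ac)
    also have "\<dots> \<le> K * norm x * norm y" by (simp add: K_def mult_right_mono)
    finally show "norm (h x y) \<le> K * norm x * norm y" .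
  qed
qed



lemma lin_span_map:
  assumes "linear f" "f ` S \<subseteq> span T" "x \<in> span S"
  shows "f x \<in> span T"
proof -
  have "f x \<in> f ` span S" using assms(3) by blast
  also have "\<dots> = span (f ` S)" using span_linear_image[OF assms(1)] by simp
  also have "\<dots> \<subseteq> span (span T)" by (rule span_mono[OF assms(2)])
  also have "\<dots> = span T" by simp
  finally show ?thesis .
qed

locale optax =
  fixes Th :: "('s, 't::real_normed_vector) opt"
  assumes ax: "opt_axioms Th"
begin

lemmas c1 = ax[unfolded opt_axioms_def, THEN conjunct1]
lemmas c2 = ax[unfolded opt_axioms_def, THEN conjunct2, THEN conjunct1]
lemmas c3 = ax[unfolded opt_axioms_def, THEN conjunct2, THEN conjunct2, THEN conjunct1]
lemmas c4 = ax[unfolded opt_axioms_def, THEN conjunct2, THEN conjunct2, THEN conjunct2, THEN conjunct1]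
lemmas c5 = ax[unfolded opt_axioms_def, THEN conjunct2, THEN conjunct2, THEN conjunct2, THEN conjunct2, THEN conjunct1]
lemmas c6 = ax[unfolded opt_axioms_def, THEN conjunct2, THEN conjunct2, THEN conjunct2, THEN conjunct2, THEN conjunct2, THEN conjunct1]
lemmas c7 = ax[unfolded opt_axioms_def, THEN conjunct2, THEN conjunct2, THEN conjunct2, THEN conjunct2, THEN conjunct2, THEN conjunct2, THEN conjunct1]
lemmas c8 = ax[unfolded opt_axioms_def, THEN conjunct2, THEN conjunct2, THEN conjunct2, THEN conjunct2, THEN conjunct2, THEN conjunct2, THEN conjunct2, THEN conjunct1]
lemmas c9 = ax[unfolded opt_axioms_def, THEN conjunct2, THEN conjunct2, THEN conjunct2, THEN conjunct2, THEN conjunct2, THEN conjunct2, THEN conjunct2, THEN conjunct2, THEN conjunct1]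
lemmas c10 = ax[unfolded opt_axioms_def, THEN conjunct2, THEN conjunct2, THEN conjunct2, THEN conjunct2, THEN conjunct2, THEN conjunct2, THEN conjunct2, THEN conjunct2, THEN conjunct2, THEN conjunct1]
lemmas c11 = ax[unfolded opt_axioms_def, THEN conjunct2, THEN conjunct2, THEN conjunct2, THEN conjunct2, THEN conjunct2, THEN conjunct2, THEN conjunct2, THEN conjunct2, THEN conjunct2, THEN conjunct2, THEN conjunct1]
lemmas c12 = ax[unfolded opt_axioms_def, THEN conjunct2, THEN conjunct2, THEN conjunct2, THEN conjunct2, THEN conjunct2, THEN conjunct2, THEN conjunct2, THEN conjunct2, THEN conjunct2, THEN conjunct2, THEN conjunct2, THEN conjunct1]
lemmas c13 = ax[unfolded opt_axioms_def, THEN conjunct2, THEN conjunct2, THEN conjunct2, THEN conjunct2, THEN conjunct2, THEN conjunct2, THEN conjunct2, THEN conjunct2, THEN conjunct2, THEN conjunct2, THEN conjunct2, THEN conjunct2, THEN conjunct1]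
lemmas c14 = ax[unfolded opt_axioms_def, THEN conjunct2, THEN conjunct2, THEN conjunct2, THEN conjunct2, THEN conjunct2, THEN conjunct2, THEN conjunct2, THEN conjunct2, THEN conjunct2, THEN conjunct2, THEN conjunct2, THEN conjunct2, THEN conjunct2, THEN conjunct1]
lemmas c15 = ax[unfolded opt_axioms_def, THEN conjunct2, THEN conjunct2, THEN conjunct2, THEN conjunct2, THEN conjunct2, THEN conjunct2, THEN conjunct2, THEN conjunct2, THEN conjunct2, THEN conjunct2, THEN conjunct2, THEN conjunct2, THEN conjunct2, THEN conjunct2, THEN conjunct1]
lemmas c16 = ax[unfolded opt_axioms_def, THEN conjunct2, THEN conjunct2, THEN conjunct2, THEN conjunct2, THEN conjunct2, THEN conjunct2, THEN conjunct2, THEN conjunct2, THEN conjunct2, THEN conjunct2, THEN conjunct2, THEN conjunct2, THEN conjunct2, THEN conjunct2, THEN conjunct2, THEN conjunct1]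
lemmas c17 = ax[unfolded opt_axioms_def, THEN conjunct2, THEN conjunct2, THEN conjunct2, THEN conjunct2, THEN conjunct2, THEN conjunct2, THEN conjunct2, THEN conjunct2, THEN conjunct2, THEN conjunct2, THEN conjunct2, THEN conjunct2, THEN conjunct2, THEN conjunct2, THEN conjunct2, THEN conjunct2, THEN conjunct1]
lemmas c18 = ax[unfolded opt_axioms_def, THEN conjunct2, THEN conjunct2, THEN conjunct2, THEN conjunct2, THEN conjunct2, THEN conjunct2, THEN conjunct2, THEN conjunct2, THEN conjunct2, THEN conjunct2, THEN conjunct2, THEN conjunct2, THEN conjunct2, THEN conjunct2, THEN conjunct2, THEN conjunct2, THEN conjunct2, THEN conjunct1]
lemmas c19 = ax[unfolded opt_axioms_def, THEN conjunct2, THEN conjunct2, THEN conjunct2, THEN conjunct2, THEN conjunct2, THEN conjunct2, THEN conjunct2, THEN conjunct2, THEN conjunct2, THEN conjunct2, THEN conjunct2, THEN conjunct2, THEN conjunct2, THEN conjunct2, THEN conjunct2, THEN conjunct2, THEN conjunct2, THEN conjunct2, THEN conjunct1]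
lemmas c20 = ax[unfolded opt_axioms_def, THEN conjunct2, THEN conjunct2, THEN conjunct2, THEN conjunct2, THEN conjunct2, THEN conjunct2, THEN conjunct2, THEN conjunct2, THEN conjunct2, THEN conjunct2, THEN conjunct2, THEN conjunct2, THEN conjunct2, THEN conjunct2, THEN conjunct2, THEN conjunct2, THEN conjunct2, THEN conjunct2, THEN conjunct2, THEN conjunct1]
lemmas c21 = ax[unfolded opt_axioms_def, THEN conjunct2, THEN conjunct2, THEN conjunct2, THEN conjunct2, THEN conjunct2, THEN conjunct2, THEN conjunct2, THEN conjunct2, THEN conjunct2, THEN conjunct2, THEN conjunct2, THEN conjunct2, THEN conjunct2, THEN conjunct2, THEN conjunct2, THEN conjunct2, THEN conjunct2, THEN conjunct2, THEN conjunct2, THEN conjunct2, THEN conjunct1]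
lemmas c22 = ax[unfolded opt_axioms_def, THEN conjunct2, THEN conjunct2, THEN conjunct2, THEN conjunct2, THEN conjunct2, THEN conjunct2, THEN conjunct2, THEN conjunct2, THEN conjunct2, THEN conjunct2, THEN conjunct2, THEN conjunct2, THEN conjunct2, THEN conjunct2, THEN conjunct2, THEN conjunct2, THEN conjunct2, THEN conjunct2, THEN conjunct2, THEN conjunct2, THEN conjunct2]

lemma ax_tens1: "tens Th A (triv Th) = A" using c1 by blast
lemma ax_ident: "ident Th A \<in> transf Th A A" using c2 by blast
lemma ax_seq: "T \<in> transf Th A B \<Longrightarrow> S \<in> transf Th B C \<Longrightarrow> seq Th S T \<in> transf Th A C"
  using c3 by blast
lemma ax_par: "T \<in> transf Th A B \<Longrightarrow> S \<in> transf Th C D \<Longrightarrow> par Th T S \<in> transf Th (tens Th A C) (tens Th B D)"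
  using c4 by blast
lemma ax_unitL: "T \<in> transf Th A B \<Longrightarrow> seq Th (ident Th B) T = T"
  using c5 by blast
lemma ax_unitR: "T \<in> transf Th A B \<Longrightarrow> seq Th T (ident Th A) = T"
  using c5 by blast
lemma ax_assoc: "T \<in> transf Th A B \<Longrightarrow> S \<in> transf Th B C \<Longrightarrow> R \<in> transf Th C D \<Longrightarrow>
          seq Th R (seq Th S T) = seq Th (seq Th R S) T"
  using c6 by blast
lemma ax_interchange: "T \<in> transf Th A B \<Longrightarrow> S \<in> transf Th B C \<Longrightarrow>
          T' \<in> transf Th A' B' \<Longrightarrow> S' \<in> transf Th B' C' \<Longrightarrow>
          par Th (seq Th S T) (seq Th S' T') = seq Th (par Th S S') (par Th T T')"
  using c8 by blast
lemma ax_par_triv: "T \<in> transf Th A B \<Longrightarrow> par Th T (ident Th (triv Th)) = T"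
  using c9 by blast
lemma ax_bil: "bilinear (seq Th)" using c10 by blast
lemma ax_tests_sub: "xs \<in> tests Th A B \<Longrightarrow> set xs \<subseteq> transf Th A B"
  using c15 by blast
lemma ax_triv_sum: "xs \<in> tests Th (triv Th) (triv Th) \<Longrightarrow> sum_list xs = ident Th (triv Th)"
  using c16 by blast
lemma ax_tests_seq: "xs \<in> tests Th A B \<Longrightarrow> ys \<in> tests Th B C \<Longrightarrow>
          [seq Th y x. x \<leftarrow> xs, y \<leftarrow> ys] \<in> tests Th A C"
  using c17 by blast
lemma ax_fin: "\<exists>F. finite F \<and> transf Th A B \<subseteq> span F"
  using c20 by blast
lemma ax_closed: "closed (transf Th A B)"
  using c22 by blast

lemma det_transf: "T \<in> det Th A B \<Longrightarrow> T \<in> transf Th A B"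
  using ax_tests_sub[of "[T]" A B] unfolding det_def by auto

lemmas bil_simps = bilinear_ladd[OF ax_bil] bilinear_radd[OF ax_bil] bilinear_lmul[OF ax_bil]
  bilinear_rmul[OF ax_bil] bilinear_lsub[OF ax_bil] bilinear_rsub[OF ax_bil]
  bilinear_lzero[OF ax_bil] bilinear_rzero[OF ax_bil] bilinear_lneg[OF ax_bil] bilinear_rneg[OF ax_bil]

lemma lin_l: "linear (\<lambda>x. seq Th x y)" using ax_bil unfolding bilinear_def by blast
lemma lin_r: "linear (seq Th x)" using ax_bil unfolding bilinear_def by blast

definition W :: "'s \<Rightarrow> 't set" where "W A = span (transf Th A A)"

lemma W_basis: obtains B where "finite B" "independent B" "B \<subseteq> W A" "span B = W A"
proof -
  obtain F0 where F0: "finite F0" "transf Th A A \<subseteq> span F0" using ax_fin by blast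
  obtain B where B: "B \<subseteq> W A" "independent B" "W A \<subseteq> span B"
    using maximal_independent_subset[of "W A"] by blast
  have "W A \<subseteq> span F0" unfolding W_def using span_mono[OF F0(2)] unfolding real_vector.span_span .
  then have "finite B" using independent_span_bound[OF F0(1) B(2)] B(1) by blast
  moreover have "span B \<subseteq> W A" using span_mono[OF B(1)] unfolding W_def real_vector.span_span .
  then have "span B = W A" using B(3) by (rule subset_antisym)
  ultimately show ?thesis using that B by blast
qed

lemma W_subspace: "subspace (W A)" unfolding W_def by simp
lemma W_complete: "complete (W A)"
proof -
  obtain B where "finite B" "span B = W A" by (rule W_basis)
  moreover have "complete (span B)" using fin_span_coords[OF \<open>finite B\<close>] by blast
  ultimately show ?thesis by simp
qed
lemma W_closed: "closed (W A)" by (rule complete_imp_closed[OF W_complete])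
lemma transf_W: "T \<in> transf Th A A \<Longrightarrow> T \<in> W A" unfolding W_def by (rule span_base)
lemma e_W: "ident Th A \<in> W A" by (rule transf_W[OF ax_ident])
lemma W_add: "x \<in> W A \<Longrightarrow> y \<in> W A \<Longrightarrow> x + y \<in> W A" unfolding W_def by (rule span_add)
lemma W_diff: "x \<in> W A \<Longrightarrow> y \<in> W A \<Longrightarrow> x - y \<in> W A" unfolding W_def by (rule span_diff)
lemma W_scale: "x \<in> W A \<Longrightarrow> c *\<^sub>R x \<in> W A" unfolding W_def by (rule span_scale)
lemma W_zero: "0 \<in> W A" unfolding W_def by (rule span_zero)
lemma W_sum: "(\<And>i. i \<in> I \<Longrightarrow> f i \<in> W A) \<Longrightarrow> sum f I \<in> W A" unfolding W_def by (rule span_sum)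

lemma seq_W: assumes "x \<in> W A" "y \<in> W A" shows "seq Th x y \<in> W A"
proof -
  have 1: "seq Th x' y' \<in> W A" if "x' \<in> W A" "y' \<in> transf Th A A" for x' y'
  proof -
    have "(\<lambda>x. seq Th x y') ` transf Th A A \<subseteq> span (transf Th A A)"
      using ax_seq[OF that(2)] by (auto intro: span_base)
    from lin_span_map[OF lin_l this] that(1) show ?thesis unfolding W_def .
  qed
  have "seq Th x ` transf Th A A \<subseteq> span (transf Th A A)"
    using 1[OF assms(1)] unfolding W_def by auto
  from lin_span_map[OF lin_r this] assms(2) show ?thesis unfolding W_def .
qed

lemma e_left: assumes "x \<in> W A" shows "seq Th (ident Th A) x = x"
proof -
  have "seq Th (ident Th A) x = id x"
    by (rule real_vector.linear_eq_on[OF lin_r linear_id, of x "transf Th A A"])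
       (use assms ax_unitL in \<open>auto simp: W_def\<close>)
  then show ?thesis by simp
qed

lemma e_right: assumes "x \<in> W A" shows "seq Th x (ident Th A) = x"
proof -
  have "seq Th x (ident Th A) = id x"
    by (rule real_vector.linear_eq_on[OF lin_l linear_id, of x "transf Th A A"])
       (use assms ax_unitR in \<open>auto simp: W_def\<close>)
  then show ?thesis by simp
qed

lemma assoc_W: assumes "x \<in> W A" "y \<in> W A" "z \<in> W A"
  shows "seq Th x (seq Th y z) = seq Th (seq Th x y) z"
proof -
  have l1: "linear (\<lambda>x. seq Th x (seq Th y z))" for y z by (rule lin_l)
  have l2: "linear (\<lambda>x. seq Th (seq Th x y) z)" for y z
    by (rule linearI) (simp_all add: bil_simps)
  have l3: "linear (\<lambda>y. seq Th x (seq Th y z))" for x z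
    by (rule linearI) (simp_all add: bil_simps)
  have l4: "linear (\<lambda>y. seq Th (seq Th x y) z)" for x z
    by (rule linearI) (simp_all add: bil_simps)
  have l5: "linear (\<lambda>z. seq Th x (seq Th y z))" for x y
    by (rule linearI) (simp_all add: bil_simps)
  have l6: "linear (\<lambda>z. seq Th (seq Th x y) z)" for x y by (rule lin_r)
  have s1: "seq Th x' (seq Th y' z') = seq Th (seq Th x' y') z'"
    if "x' \<in> W A" "y' \<in> transf Th A A" "z' \<in> transf Th A A" for x' y' z'
    by (rule real_vector.linear_eq_on[OF l1 l2, of x' "transf Th A A"])
       (use that ax_assoc[OF that(3) that(2)] in \<open>auto simp: W_def\<close>)
  have s2: "seq Th x' (seq Th y' z') = seq Th (seq Th x' y') z'"
    if "x' \<in> W A" "y' \<in> W A" "z' \<in> transf Th A A" for x' y' z'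
    by (rule real_vector.linear_eq_on[OF l3 l4, of y' "transf Th A A"])
       (use that s1 in \<open>auto simp: W_def\<close>)
  show ?thesis
    by (rule real_vector.linear_eq_on[OF l5 l6, of z "transf Th A A"])
       (use assms s2 in \<open>auto simp: W_def\<close>)
qed

definition Kc :: "'s \<Rightarrow> real" where
  "Kc A = (SOME K. K \<ge> 1 \<and> (\<forall>x\<in>W A. \<forall>y\<in>W A. norm (seq Th x y) \<le> K * norm x * norm y))"

lemma Kc: "Kc A \<ge> 1 \<and> (\<forall>x\<in>W A. \<forall>y\<in>W A. norm (seq Th x y) \<le> Kc A * norm x * norm y)"
proof -
  obtain B where B: "finite B" "span B = W A" by (rule W_basis)
  obtain K where K: "K > 0" "\<forall>x\<in>W A. \<forall>y\<in>W A. norm (seq Th x y) \<le> K * norm x * norm y"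
    using fin_bilinear_bound[OF B(1) ax_bil] B(2) by auto
  have "\<forall>x\<in>W A. \<forall>y\<in>W A. norm (seq Th x y) \<le> max K 1 * norm x * norm y"
  proof (intro ballI)
    fix x y assume "x \<in> W A" "y \<in> W A"
    then have "norm (seq Th x y) \<le> K * norm x * norm y" using K by blast
    also have "\<dots> \<le> max K 1 * norm x * norm y" by (intro mult_right_mono) auto
    finally show "norm (seq Th x y) \<le> max K 1 * norm x * norm y" .
  qed
  then have "\<exists>K. K \<ge> 1 \<and> (\<forall>x\<in>W A. \<forall>y\<in>W A. norm (seq Th x y) \<le> K * norm x * norm y)"
    by (intro exI[of _ "max K 1"]) auto
  then show ?thesis unfolding Kc_def by (rule someI_ex)
qed

lemma Kc_ge1: "Kc A \<ge> 1" using Kc by blast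
lemma Kc_bound: "x \<in> W A \<Longrightarrow> y \<in> W A \<Longrightarrow> norm (seq Th x y) \<le> Kc A * norm x * norm y"
  using Kc by blast

end


lemma choose_fact_le: "k \<le> n \<Longrightarrow> (n choose k) * fact k \<le> (n::nat) ^ k"
  by (metis binomial_fact_pow)

lemma binom_step:
  fixes p :: "nat \<Rightarrow> 'a::real_vector"
  shows "(\<Sum>k\<le>n. real (n choose k) *\<^sub>R p k) + (\<Sum>k\<le>n. real (n choose k) *\<^sub>R p (Suc k))
       = (\<Sum>k\<le>Suc n. real (Suc n choose k) *\<^sub>R p k)"
proof -
  have "(\<Sum>k\<le>Suc n. real (Suc n choose k) *\<^sub>R p k) = p 0 + (\<Sum>k\<le>n. real (n choose Suc k) *\<^sub>R p (Suc k)) + (\<Sum>k\<le>n. real (n choose k) *\<^sub>R p (Suc k))"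
    unfolding sum.atMost_Suc_shift by (simp add: scaleR_add_left sum.distrib algebra_simps)
  also have "p 0 + (\<Sum>k\<le>n. real (n choose Suc k) *\<^sub>R p (Suc k)) = (\<Sum>k\<le>n. real (n choose k) *\<^sub>R p k)"
  proof -
    have "(\<Sum>k\<le>n. real (n choose k) *\<^sub>R p k) = (\<Sum>k<Suc n. real (n choose k) *\<^sub>R p k)"
      by (simp add: lessThan_Suc_atMost)
    also have "\<dots> = p 0 + (\<Sum>k<n. real (n choose Suc k) *\<^sub>R p (Suc k))"
      unfolding sum.lessThan_Suc_shift by simp
    also have "(\<Sum>k<n. real (n choose Suc k) *\<^sub>R p (Suc k)) = (\<Sum>k<Suc n. real (n choose Suc k) *\<^sub>R p (Suc k))"
      by (simp add: sum.lessThan_Suc)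
    also have "\<dots> = (\<Sum>k\<le>n. real (n choose Suc k) *\<^sub>R p (Suc k))"
      by (simp add: lessThan_Suc_atMost)
    finally show ?thesis by simp
  qed
  finally show ?thesis by simp
qed

context optax
begin

lemma pw_W: "x \<in> W A \<Longrightarrow> opow Th A x n \<in> W A"
  by (induct n) (auto simp: e_W seq_W)

lemma pw_transf: "x \<in> transf Th A A \<Longrightarrow> opow Th A x n \<in> transf Th A A"
  by (induct n) (auto intro: ax_ident ax_seq)

lemma pw_add: assumes "x \<in> W A" shows "opow Th A x (i + j) = seq Th (opow Th A x i) (opow Th A x j)"
proof (induct i)
  case 0 then show ?case using e_left[OF pw_W[OF assms]] by simp
next
  case (Suc i)
  then show ?case using assoc_W[OF assms pw_W[OF assms] pw_W[OF assms]] by simp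
qed

lemma pw_scale: "opow Th A (r *\<^sub>R x) n = r ^ n *\<^sub>R opow Th A x n"
  by (induct n) (simp_all add: bil_simps)

lemma pw_comm: assumes "x \<in> W A" "y \<in> W A" "seq Th x y = seq Th y x"
  shows "seq Th y (opow Th A x n) = seq Th (opow Th A x n) y"
proof (induct n)
  case 0 then show ?case using e_left[OF assms(2)] e_right[OF assms(2)] by simp
next
  case (Suc n)
  have P: "opow Th A x n \<in> W A" by (rule pw_W[OF assms(1)])
  have "seq Th y (opow Th A x (Suc n)) = seq Th (seq Th y x) (opow Th A x n)"
    using assoc_W[OF assms(2) assms(1) P] by simp
  also have "\<dots> = seq Th x (seq Th y (opow Th A x n))"
    using assoc_W[OF assms(1) assms(2) P] assms(3) by simp
  also have "\<dots> = seq Th (opow Th A x (Suc n)) y"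
    using Suc assoc_W[OF assms(1) P assms(2)] by simp
  finally show ?case .
qed

lemma pw_mult: assumes "x \<in> W A" "y \<in> W A" "seq Th x y = seq Th y x"
  shows "opow Th A (seq Th x y) n = seq Th (opow Th A x n) (opow Th A y n)"
proof (induct n)
  case 0 then show ?case using e_left[OF e_W] by simp
next
  case (Suc n)
  define X where "X = opow Th A x n"
  define Y where "Y = opow Th A y n"
  have XW: "X \<in> W A" "Y \<in> W A" unfolding X_def Y_def using pw_W assms by auto
  have c: "seq Th y X = seq Th X y" unfolding X_def by (rule pw_comm[OF assms])
  have "opow Th A (seq Th x y) (Suc n) = seq Th (seq Th x y) (seq Th X Y)"
    using Suc by (simp add: X_def Y_def)
  also have "\<dots> = seq Th x (seq Th y (seq Th X Y))"
    using assoc_W[OF assms(1) assms(2) seq_W[OF XW]] by simp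
  also have "seq Th y (seq Th X Y) = seq Th X (seq Th y Y)"
    using assoc_W[OF assms(2) XW] assoc_W[OF XW(1) assms(2) XW(2)] c by simp
  also have "seq Th x (seq Th X (seq Th y Y)) = seq Th (seq Th x X) (seq Th y Y)"
    using assoc_W[OF assms(1) XW(1) seq_W[OF assms(2) XW(2)]] by simp
  finally show ?case by (simp add: X_def Y_def)
qed

lemma pw_binom: assumes "x \<in> W A"
  shows "opow Th A (ident Th A + x) n = (\<Sum>k\<le>n. real (n choose k) *\<^sub>R opow Th A x k)"
proof (induct n)
  case 0 then show ?case by simp
next
  case (Suc n)
  define S where "S = (\<Sum>k\<le>n. real (n choose k) *\<^sub>R opow Th A x k)"
  have SW: "S \<in> W A" unfolding S_def by (intro W_sum W_scale pw_W assms)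
  have "opow Th A (ident Th A + x) (Suc n) = seq Th (ident Th A + x) S" using Suc by (simp add: S_def)
  also have "\<dots> = S + seq Th x S" using e_left[OF SW] by (simp add: bil_simps)
  also have "seq Th x S = (\<Sum>k\<le>n. real (n choose k) *\<^sub>R opow Th A x (Suc k))"
    unfolding S_def by (simp add: linear_sum[OF lin_r] bil_simps)
  finally show ?case unfolding S_def using binom_step[of n "opow Th A x"] by simp
qed

lemma pw_norm: assumes "x \<in> W A"
  shows "norm (opow Th A x n) \<le> norm (ident Th A) * (Kc A * norm x) ^ n"
proof (induct n)
  case 0 then show ?case by simp
next
  case (Suc n)
  have "norm (opow Th A x (Suc n)) \<le> Kc A * norm x * norm (opow Th A x n)"
    using Kc_bound[OF assms pw_W[OF assms]] by simp
  also have "\<dots> \<le> Kc A * norm x * (norm (ident Th A) * (Kc A * norm x) ^ n)"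
    using Suc Kc_ge1[of A] by (intro mult_left_mono) auto
  finally show ?case by (simp add: algebra_simps)
qed

lemma summable_W:
  assumes f: "\<And>k. f k \<in> W A" and g: "\<And>k. norm (f k) \<le> g k" and sg: "summable g"
  shows "summable f \<and> suminf f \<in> W A"
proof -
  define P where "P n = sum f {..<n}" for n
  have PW: "P n \<in> W A" for n unfolding P_def by (intro W_sum f)
  have aux: "dist (P m) (P n) < e" if "\<forall>m\<ge>N. \<forall>n. norm (sum g {m..<n}) < e" "N \<le> m" "m \<le> n" for m n N e
  proof -
    have "P n - P m = sum f {m..<n}"
      unfolding P_def using sum_diff_nat_ivl[of 0 m n f] that(3) by (simp add: atLeast0LessThan)
    have "dist (P m) (P n) = dist (P n) (P m)" by (rule dist_commute)
    also have "\<dots> = norm (P n - P m)" by (rule dist_norm)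
    finally have "dist (P m) (P n) = norm (sum f {m..<n})" using \<open>P n - P m = sum f {m..<n}\<close> by simp
    also have "\<dots> \<le> sum (\<lambda>k. norm (f k)) {m..<n}" by (rule norm_sum)
    also have "\<dots> \<le> sum g {m..<n}" by (intro sum_mono g)
    also have "\<dots> \<le> norm (sum g {m..<n})" by simp
    also have "\<dots> < e" using that by blast
    finally show ?thesis .
  qed
  have "Cauchy P"
  proof (rule metric_CauchyI)
    fix e :: real assume "0 < e"
    then obtain N where N: "\<forall>m\<ge>N. \<forall>n. norm (sum g {m..<n}) < e" using sg summable_Cauchy by blast
    show "\<exists>M. \<forall>m\<ge>M. \<forall>n\<ge>M. dist (P m) (P n) < e"
    proof (intro exI allI impI)
      fix m n assume "N \<le> m" "N \<le> n"
      show "dist (P m) (P n) < e"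
      proof (cases "m \<le> n")
        case True then show ?thesis using aux[OF N \<open>N \<le> m\<close>] by blast
      next
        case False
        then have "dist (P n) (P m) < e" using aux[OF N \<open>N \<le> n\<close>] by simp
        then show ?thesis by (simp add: dist_commute)
      qed
    qed
  qed
  then obtain l where l: "l \<in> W A" "P \<longlonglongrightarrow> l" using completeE[OF W_complete] PW by metis
  then have "f sums l" unfolding sums_def P_def by simp
  then show ?thesis using l(1) sums_unique[of f l] by (auto simp: sums_summable)
qed

lemma norm_sums_le:
  fixes f :: "nat \<Rightarrow> 'a::real_normed_vector"
  assumes "f sums s" "\<And>k. norm (f k) \<le> g k" "summable g"
  shows "norm s \<le> suminf g"
proof -
  have "(\<lambda>n. norm (sum f {..<n})) \<longlonglongrightarrow> norm s" using assms(1) unfolding sums_def by (rule tendsto_norm)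
  moreover have "norm (sum f {..<n}) \<le> suminf g" for n
  proof -
    have "norm (sum f {..<n}) \<le> sum (\<lambda>k. norm (f k)) {..<n}" by (rule norm_sum)
    also have "\<dots> \<le> sum g {..<n}" by (intro sum_mono assms(2))
    also have "\<dots> \<le> suminf g" by (rule sum_le_suminf[OF assms(3)]) (auto intro: order_trans[OF norm_ge_zero assms(2)])
    finally show ?thesis .
  qed
  ultimately show ?thesis by (intro LIMSEQ_le_const2) auto
qed

lemma exp_series:
  assumes Z: "Z \<in> W A"
  shows "(\<lambda>n. (1 / fact n) *\<^sub>R opow Th A Z n) sums opt_exp Th A Z" "opt_exp Th A Z \<in> W A"
proof -
  define r where "r = Kc A * norm Z"
  have b: "norm ((1 / fact n) *\<^sub>R opow Th A Z n) \<le> norm (ident Th A) * (inverse (fact n) * r ^ n)" for n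
  proof -
    have "norm ((1 / fact n) *\<^sub>R opow Th A Z n) = inverse (fact n) * norm (opow Th A Z n)"
      by (simp add: inverse_eq_divide)
    also have "\<dots> \<le> inverse (fact n) * (norm (ident Th A) * r ^ n)"
      using pw_norm[OF Z] by (intro mult_left_mono) (auto simp: r_def)
    finally show ?thesis by (simp add: algebra_simps)
  qed
  have s: "summable (\<lambda>n. norm (ident Th A) * (inverse (fact n) * r ^ n))"
    by (intro summable_mult summable_exp)
  have "summable (\<lambda>n. (1 / fact n) *\<^sub>R opow Th A Z n) \<and> suminf (\<lambda>n. (1 / fact n) *\<^sub>R opow Th A Z n) \<in> W A"
    by (rule summable_W[OF _ b s]) (intro W_scale pw_W Z)
  then show "(\<lambda>n. (1 / fact n) *\<^sub>R opow Th A Z n) sums opt_exp Th A Z" "opt_exp Th A Z \<in> W A"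
    unfolding opt_exp_def by (auto simp: summable_sums)
qed

end


context optax
begin

lemma pw_e_step: assumes "a \<in> W A"
  shows "opow Th A (ident Th A + a) (Suc n) = opow Th A (ident Th A + a) n + seq Th a (opow Th A (ident Th A + a) n)"
proof -
  have "opow Th A (ident Th A + a) n \<in> W A" by (intro pw_W W_add e_W assms)
  then show ?thesis using e_left by (simp add: bil_simps)
qed

lemma pw_e_bound: assumes "b \<in> W A"
  shows "norm (opow Th A (ident Th A + b) n) \<le> norm (ident Th A) * (1 + Kc A * norm b) ^ n"
proof (induct n)
  case 0 then show ?case by simp
next
  case (Suc n)
  define P where "P = opow Th A (ident Th A + b) n"
  have PW: "P \<in> W A" unfolding P_def by (intro pw_W W_add e_W assms)
  have "norm (opow Th A (ident Th A + b) (Suc n)) \<le> norm P + norm (seq Th b P)"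
    unfolding pw_e_step[OF assms] P_def by (rule norm_triangle_ineq)
  also have "\<dots> \<le> norm P + Kc A * norm b * norm P" using Kc_bound[OF assms PW] by simp
  also have "\<dots> = (1 + Kc A * norm b) * norm P" by (simp add: algebra_simps)
  also have "\<dots> \<le> (1 + Kc A * norm b) * (norm (ident Th A) * (1 + Kc A * norm b) ^ n)"
    using Suc Kc_ge1[of A] unfolding P_def by (intro mult_left_mono) auto
  finally show ?case by (simp add: algebra_simps)
qed

lemma pw_diff_bound: assumes a: "a \<in> W A" and b: "b \<in> W A"
  shows "norm (opow Th A (ident Th A + a) n - opow Th A (ident Th A + b) n)
     \<le> real n * Kc A * norm (a - b) * norm (ident Th A) * (1 + Kc A * max (norm a) (norm b)) ^ n"
proof (induct n)
  case 0 then show ?case by simp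
next
  case (Suc n)
  define K where "K = Kc A"
  define \<rho> where "\<rho> = 1 + K * max (norm a) (norm b)"
  define \<delta> where "\<delta> = norm (a - b)"
  define E where "E = norm (ident Th A)"
  define P where "P = opow Th A (ident Th A + a) n"
  define Q where "Q = opow Th A (ident Th A + b) n"
  have K1: "K \<ge> 1" unfolding K_def by (rule Kc_ge1)
  have "0 \<le> K * max (norm a) (norm b)" using K1 by (intro mult_nonneg_nonneg) (auto simp: le_max_iff_disj)
  then have \<rho>1: "\<rho> \<ge> 1" unfolding \<rho>_def by simp
  have PW: "P \<in> W A" unfolding P_def by (intro pw_W W_add e_W a)
  have QW: "Q \<in> W A" unfolding Q_def by (intro pw_W W_add e_W b)
  have IH: "norm (P - Q) \<le> real n * K * \<delta> * E * \<rho> ^ n" using Suc by (simp add: P_def Q_def K_def \<delta>_def E_def \<rho>_def)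
  have eq: "opow Th A (ident Th A + a) (Suc n) - opow Th A (ident Th A + b) (Suc n)
          = (P - Q) + seq Th a (P - Q) + seq Th (a - b) Q"
    unfolding pw_e_step[OF a] pw_e_step[OF b] P_def Q_def by (simp add: bil_simps algebra_simps)
  have n1: "norm (seq Th a (P - Q)) \<le> K * norm a * norm (P - Q)"
    using Kc_bound[OF a W_diff[OF PW QW]] by (simp add: K_def)
  have n2: "norm (seq Th (a - b) Q) \<le> K * \<delta> * norm Q"
    using Kc_bound[OF W_diff[OF a b] QW] by (simp add: K_def \<delta>_def)
  have Qb: "norm Q \<le> E * \<rho> ^ n"
  proof -
    have "norm Q \<le> E * (1 + K * norm b) ^ n" using pw_e_bound[OF b] by (simp add: Q_def E_def K_def)
    also have "\<dots> \<le> E * \<rho> ^ n" unfolding \<rho>_def E_def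
      using K1 by (intro mult_left_mono power_mono) auto
    finally show ?thesis .
  qed
  have Ka: "1 + K * norm a \<le> \<rho>" unfolding \<rho>_def using K1 by (simp add: mult_left_mono)
  have "norm (opow Th A (ident Th A + a) (Suc n) - opow Th A (ident Th A + b) (Suc n))
      \<le> norm (P - Q) + norm (seq Th a (P - Q)) + norm (seq Th (a - b) Q)"
    unfolding eq by (meson norm_triangle_le norm_triangle_ineq add_mono order_refl)
  also have "\<dots> \<le> (1 + K * norm a) * norm (P - Q) + K * \<delta> * norm Q"
    using n1 n2 by (simp add: algebra_simps)
  also have "\<dots> \<le> \<rho> * (real n * K * \<delta> * E * \<rho> ^ n) + K * \<delta> * (E * \<rho> ^ n)"
  proof (intro add_mono mult_mono)
    show "0 \<le> K * \<delta>" using K1 by (simp add: \<delta>_def)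
  qed (use Ka IH Qb K1 \<rho>1 in \<open>auto simp: \<delta>_def\<close>)
  also have "\<dots> \<le> \<rho> * (real n * K * \<delta> * E * \<rho> ^ n) + \<rho> * (K * \<delta> * E * \<rho> ^ n)"
  proof -
    have "0 \<le> K * \<delta> * E * \<rho> ^ n" using K1 \<rho>1 by (simp add: \<delta>_def E_def)
    then have "1 * (K * \<delta> * E * \<rho> ^ n) \<le> \<rho> * (K * \<delta> * E * \<rho> ^ n)"
      by (rule mult_right_mono[OF \<rho>1])
    then have "K * \<delta> * (E * \<rho> ^ n) \<le> \<rho> * (K * \<delta> * E * \<rho> ^ n)" by (simp add: mult_ac)
    then show ?thesis by simp
  qed
  also have "\<dots> = real (Suc n) * K * \<delta> * E * \<rho> ^ Suc n" by (simp add: algebra_simps)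
  finally show ?case by (simp add: K_def \<delta>_def E_def \<rho>_def)
qed

end


context optax
begin

lemma exp_approx: assumes Z: "Z \<in> W A" and n: "n > 0"
  shows "norm (opt_exp Th A Z - opow Th A (ident Th A + (1 / real n) *\<^sub>R Z) n)
         \<le> norm (ident Th A) * (exp (Kc A * norm Z) - (1 + Kc A * norm Z / real n) ^ n)"
proof -
  define r where "r = Kc A * norm Z"
  define E where "E = norm (ident Th A)"
  define b where "b k = (if k \<le> n then real (n choose k) / real n ^ k else 0)" for k
  have r0: "r \<ge> 0" unfolding r_def using Kc_ge1[of A] by simp
  have E0: "E \<ge> 0" unfolding E_def by simp
  have pwe: "opow Th A (ident Th A + (1 / real n) *\<^sub>R Z) n = (\<Sum>k\<le>n. b k *\<^sub>R opow Th A Z k)"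
    unfolding pw_binom[OF W_scale[OF Z]] pw_scale
    by (intro sum.cong refl) (simp add: b_def power_one_over)
  have s1: "(\<lambda>k. b k *\<^sub>R opow Th A Z k) sums (\<Sum>k\<le>n. b k *\<^sub>R opow Th A Z k)"
    by (rule sums_finite) (auto simp: b_def)
  have s3: "(\<lambda>k. (1 / fact k - b k) *\<^sub>R opow Th A Z k) sums (opt_exp Th A Z - (\<Sum>k\<le>n. b k *\<^sub>R opow Th A Z k))"
    using sums_diff[OF exp_series(1)[OF Z] s1] by (simp add: scaleR_diff_left)
  have cb: "b k \<le> 1 / fact k" for k
  proof (cases "k \<le> n")
    case True
    have "(n choose k) * fact k \<le> n ^ k" by (rule choose_fact_le[OF True])
    then have "real (n choose k) * fact k \<le> real n ^ k"
      by (metis of_nat_fact of_nat_le_iff of_nat_mult of_nat_power)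
    moreover have "real n ^ k > 0" using n by simp
    ultimately show ?thesis using True by (simp add: b_def divide_simps mult.commute)
  qed (simp add: b_def)
  define g where "g k = (1 / fact k - b k) * (E * r ^ k)" for k
  have gb: "norm ((1 / fact k - b k) *\<^sub>R opow Th A Z k) \<le> g k" for k
  proof -
    have "norm ((1 / fact k - b k) *\<^sub>R opow Th A Z k) = (1 / fact k - b k) * norm (opow Th A Z k)"
      using cb[of k] by simp
    also have "\<dots> \<le> (1 / fact k - b k) * (E * r ^ k)"
      using cb[of k] pw_norm[OF Z, of k] by (intro mult_left_mono) (auto simp: E_def r_def)
    finally show ?thesis unfolding g_def .
  qed
  have g1: "(\<lambda>k. E * (r ^ k /\<^sub>R fact k)) sums (E * exp r)"
    by (intro sums_mult exp_converges)
  have g2: "(\<lambda>k. E * (b k * r ^ k)) sums (\<Sum>k\<le>n. E * (b k * r ^ k))"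
    by (rule sums_finite) (auto simp: b_def)
  have "(\<Sum>k\<le>n. E * (b k * r ^ k)) = E * (r / real n + 1) ^ n"
    unfolding binomial_ring sum_distrib_left
    by (intro sum.cong refl) (simp add: b_def power_divide)
  then have g2': "(\<lambda>k. E * (b k * r ^ k)) sums (E * (1 + r / real n) ^ n)" using g2 by (simp add: add.commute)
  have gs: "g sums (E * exp r - E * (1 + r / real n) ^ n)"
    using sums_diff[OF g1 g2'] unfolding g_def by (simp add: algebra_simps divide_inverse)
  have "norm (opt_exp Th A Z - (\<Sum>k\<le>n. b k *\<^sub>R opow Th A Z k)) \<le> suminf g"
    by (rule norm_sums_le[OF s3 gb sums_summable[OF gs]])
  also have "suminf g = E * (exp r - (1 + r / real n) ^ n)" using sums_unique[OF gs] by (simp add: algebra_simps)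
  finally show ?thesis unfolding pwe E_def r_def .
qed

lemma key:
  assumes Z: "Z \<in> W A" and Y: "\<And>n. Y n \<in> W A"
    and lim: "(\<lambda>n. real n *\<^sub>R (Y n - ident Th A)) \<longlonglongrightarrow> Z"
  shows "(\<lambda>n. opow Th A (Y n) n) \<longlonglongrightarrow> opt_exp Th A Z"
proof -
  define Zn where "Zn n = real n *\<^sub>R (Y n - ident Th A)" for n
  have ZnW: "Zn n \<in> W A" for n unfolding Zn_def by (intro W_scale W_diff Y e_W)
  have limZ: "Zn \<longlonglongrightarrow> Z" using lim unfolding Zn_def .
  obtain R where R: "R > 0" "\<And>n. norm (Zn n) \<le> R"
    using convergent_imp_Bseq[of Zn] limZ BseqE unfolding convergent_def by metis
  define R' where "R' = max R (norm Z)"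
  define K where "K = Kc A"
  define E where "E = norm (ident Th A)"
  define r where "r = K * norm Z"
  have K1: "K \<ge> 1" unfolding K_def by (rule Kc_ge1)
  have R'0: "R' \<ge> 0" unfolding R'_def using R by simp
  define g where "g n = K * E * exp (K * R') * norm (Zn n - Z) + E * (exp r - (1 + r / real n) ^ n)" for n
  have bound: "norm (opow Th A (Y n) n - opt_exp Th A Z) \<le> g n" if n: "n > 0" for n
  proof -
    define a where "a = (1 / real n) *\<^sub>R Zn n"
    define bb where "bb = (1 / real n) *\<^sub>R Z"
    have aW: "a \<in> W A" and bW: "bb \<in> W A" unfolding a_def bb_def by (intro W_scale ZnW Z)+
    have Yn: "Y n = ident Th A + a" unfolding a_def Zn_def using n by simp
    have "norm (opow Th A (Y n) n - opt_exp Th A Z)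
        \<le> norm (opow Th A (ident Th A + a) n - opow Th A (ident Th A + bb) n)
          + norm (opow Th A (ident Th A + bb) n - opt_exp Th A Z)"
      unfolding Yn by (rule norm_diff_triangle_le) (rule order_refl)+
    also have "norm (opow Th A (ident Th A + bb) n - opt_exp Th A Z) \<le> E * (exp r - (1 + r / real n) ^ n)"
      using exp_approx[OF Z n] by (simp add: norm_minus_commute bb_def E_def r_def K_def)
    also have "norm (opow Th A (ident Th A + a) n - opow Th A (ident Th A + bb) n)
        \<le> real n * K * norm (a - bb) * E * (1 + K * max (norm a) (norm bb)) ^ n"
      using pw_diff_bound[OF aW bW] by (simp add: K_def E_def)
    also have "real n * norm (a - bb) = norm (Zn n - Z)"
    proof -
      have "a - bb = (1 / real n) *\<^sub>R (Zn n - Z)" unfolding a_def bb_def by (simp add: scaleR_diff_right)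
      then show ?thesis using n by simp
    qed
    then have "real n * K * norm (a - bb) * E * (1 + K * max (norm a) (norm bb)) ^ n
         = K * E * norm (Zn n - Z) * (1 + K * max (norm a) (norm bb)) ^ n"
      by (simp add: algebra_simps)
    also have "(1 + K * max (norm a) (norm bb)) ^ n \<le> exp (K * R')"
    proof -
      have "max (norm a) (norm bb) = max (norm (Zn n)) (norm Z) / real n"
        unfolding a_def bb_def using n by (simp add: max_divide_distrib_right)
      also have "\<dots> \<le> R' / real n" unfolding R'_def using R(2)[of n] n
        by (intro divide_right_mono) auto
      finally have m: "max (norm a) (norm bb) \<le> R' / real n" .
      have "K * max (norm a) (norm bb) \<le> K * (R' / real n)" by (rule mult_left_mono[OF m]) (use K1 in simp)
      moreover have "0 \<le> K * max (norm a) (norm bb)" using K1 by (intro mult_nonneg_nonneg) (auto simp: le_max_iff_disj)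
      ultimately have "(1 + K * max (norm a) (norm bb)) ^ n \<le> (1 + K * R' / real n) ^ n"
        by (intro power_mono) auto
      also have "\<dots> \<le> exp (K * R')"
      proof (rule exp_ge_one_plus_x_over_n_power_n)
        have "0 \<le> K * R'" using K1 R'0 by simp
        then show "- real n \<le> K * R'" by linarith
      qed (use n in auto)
      finally show ?thesis .
    qed
    then have "K * E * norm (Zn n - Z) * (1 + K * max (norm a) (norm bb)) ^ n
        \<le> K * E * norm (Zn n - Z) * exp (K * R')"
      using K1 by (intro mult_left_mono) (auto simp: E_def)
    finally show ?thesis by (simp add: g_def algebra_simps)
  qed
  have t1: "(\<lambda>n. norm (Zn n - Z)) \<longlonglongrightarrow> 0" using tendsto_norm_zero[OF LIM_zero[OF limZ]] .
  have t2: "(\<lambda>n. exp r - (1 + r / real n) ^ n) \<longlonglongrightarrow> 0"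
    using tendsto_diff[OF tendsto_const[of "exp r"] tendsto_exp_limit_sequentially[of r]] by simp
  have "g \<longlonglongrightarrow> K * E * exp (K * R') * 0 + E * 0"
    unfolding g_def by (intro tendsto_add tendsto_mult tendsto_const t1 t2)
  then have "g \<longlonglongrightarrow> 0" by simp
  then have "(\<lambda>n. opow Th A (Y n) n - opt_exp Th A Z) \<longlonglongrightarrow> 0"
    by (rule Lim_null_comparison[rotated]) (use bound in \<open>auto simp: eventually_sequentially intro!: exI[of _ 1]\<close>)
  then show ?thesis by (rule LIM_zero_cancel)
qed

lemma seq_tendsto:
  assumes "(f \<longlongrightarrow> a) F" "(g \<longlongrightarrow> b) F" "\<forall>\<^sub>F x in F. f x \<in> W A" "\<forall>\<^sub>F x in F. g x \<in> W A"
    "a \<in> W A" "b \<in> W A"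
  shows "((\<lambda>x. seq Th (f x) (g x)) \<longlongrightarrow> seq Th a b) F"
proof -
  define K where "K = Kc A"
  define h where "h x = K * norm (f x - a) * norm (g x - b) + K * norm (f x - a) * norm b + K * norm a * norm (g x - b)" for x
  have ev: "\<forall>\<^sub>F x in F. norm (seq Th (f x) (g x) - seq Th a b) \<le> h x"
    using assms(3,4)
  proof eventually_elim
    case (elim x)
    have fa: "f x - a \<in> W A" and gb: "g x - b \<in> W A" using elim assms(5,6) by (auto intro: W_diff)
    have eq: "seq Th (f x) (g x) - seq Th a b = seq Th (f x - a) (g x - b) + seq Th (f x - a) b + seq Th a (g x - b)"
      by (simp add: bil_simps algebra_simps)
    have "norm (seq Th (f x) (g x) - seq Th a b) \<le> norm (seq Th (f x - a) (g x - b)) + norm (seq Th (f x - a) b) + norm (seq Th a (g x - b))"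
      unfolding eq by (meson norm_triangle_le norm_triangle_ineq add_mono order_refl)
    also have "\<dots> \<le> h x" unfolding h_def K_def
      using Kc_bound[OF fa gb] Kc_bound[OF fa assms(6)] Kc_bound[OF assms(5) gb] by (intro add_mono) auto
    finally show ?case .
  qed
  have t1: "((\<lambda>x. norm (f x - a)) \<longlongrightarrow> 0) F" by (rule tendsto_norm_zero[OF LIM_zero[OF assms(1)]])
  have t2: "((\<lambda>x. norm (g x - b)) \<longlongrightarrow> 0) F" by (rule tendsto_norm_zero[OF LIM_zero[OF assms(2)]])
  have "(h \<longlongrightarrow> K * 0 * 0 + K * 0 * norm b + K * norm a * 0) F"
    unfolding h_def by (intro tendsto_add tendsto_mult tendsto_const t1 t2)
  then have "(h \<longlongrightarrow> 0) F" by simp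
  then have "((\<lambda>x. seq Th (f x) (g x) - seq Th a b) \<longlongrightarrow> 0) F" by (rule Lim_null_comparison[OF ev])
  then show ?thesis by (rule LIM_zero_cancel)
qed

end


context optax
begin

lemma pw_e: "opow Th A (ident Th A) n = ident Th A"
  by (induct n) (simp_all add: e_left e_W)

lemma exp_zero: "opt_exp Th A 0 = ident Th A"
proof -
  have "(\<lambda>n. opow Th A (ident Th A) n) \<longlonglongrightarrow> opt_exp Th A 0"
    by (rule key) (auto simp: W_zero e_W)
  then have "(\<lambda>n. ident Th A) \<longlonglongrightarrow> opt_exp Th A 0" by (simp add: pw_e)
  then show ?thesis using LIMSEQ_unique[OF tendsto_const] by metis
qed

lemma seq_eG: assumes G: "G \<in> W A"
  shows "seq Th (ident Th A + \<alpha> *\<^sub>R G) (ident Th A + \<beta> *\<^sub>R G)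
       = ident Th A + (\<alpha> + \<beta>) *\<^sub>R G + (\<alpha> * \<beta>) *\<^sub>R seq Th G G"
  using e_left[OF G] e_right[OF G] e_left[OF e_W] by (simp add: bil_simps algebra_simps scaleR_add_left)

lemma exp_lim_line: assumes G: "G \<in> W A"
  shows "(\<lambda>n. opow Th A (ident Th A + (s / real n) *\<^sub>R G) n) \<longlonglongrightarrow> opt_exp Th A (s *\<^sub>R G)"
proof (rule key)
  show "s *\<^sub>R G \<in> W A" by (rule W_scale[OF G])
  show "ident Th A + (s / real n) *\<^sub>R G \<in> W A" for n by (intro W_add e_W W_scale G)
  have "\<forall>\<^sub>F n in sequentially. real n *\<^sub>R (ident Th A + (s / real n) *\<^sub>R G - ident Th A) = s *\<^sub>R G"
    unfolding eventually_sequentially by (intro exI[of _ 1]) auto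
  then show "(\<lambda>n. real n *\<^sub>R (ident Th A + (s / real n) *\<^sub>R G - ident Th A)) \<longlonglongrightarrow> s *\<^sub>R G"
    by (rule tendsto_eventually)
qed

lemma exp_add: assumes G: "G \<in> W A"
  shows "opt_exp Th A ((s + t) *\<^sub>R G) = seq Th (opt_exp Th A (s *\<^sub>R G)) (opt_exp Th A (t *\<^sub>R G))"
proof -
  define a where "a n = ident Th A + (s / real n) *\<^sub>R G" for n
  define b where "b n = ident Th A + (t / real n) *\<^sub>R G" for n
  have aW: "a n \<in> W A" and bW: "b n \<in> W A" for n unfolding a_def b_def by (intro W_add e_W W_scale G)+
  have comm: "seq Th (a n) (b n) = seq Th (b n) (a n)" for n
    unfolding a_def b_def seq_eG[OF G] by (simp add: algebra_simps)
  have la: "(\<lambda>n. opow Th A (a n) n) \<longlonglongrightarrow> opt_exp Th A (s *\<^sub>R G)" unfolding a_def by (rule exp_lim_line[OF G])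
  have lb: "(\<lambda>n. opow Th A (b n) n) \<longlonglongrightarrow> opt_exp Th A (t *\<^sub>R G)" unfolding b_def by (rule exp_lim_line[OF G])
  have l1: "(\<lambda>n. seq Th (opow Th A (a n) n) (opow Th A (b n) n)) \<longlonglongrightarrow> seq Th (opt_exp Th A (s *\<^sub>R G)) (opt_exp Th A (t *\<^sub>R G))"
  proof (rule seq_tendsto[OF la lb])
    show "\<forall>\<^sub>F n in sequentially. opow Th A (a n) n \<in> W A" by (rule always_eventually) (intro allI pw_W aW)
    show "\<forall>\<^sub>F n in sequentially. opow Th A (b n) n \<in> W A" by (rule always_eventually) (intro allI pw_W bW)
    show "opt_exp Th A (s *\<^sub>R G) \<in> W A" "opt_exp Th A (t *\<^sub>R G) \<in> W A" by (intro exp_series(2) W_scale G)+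
  qed
  have l2: "(\<lambda>n. opow Th A (seq Th (a n) (b n)) n) \<longlonglongrightarrow> opt_exp Th A ((s + t) *\<^sub>R G)"
  proof (rule key)
    show "(s + t) *\<^sub>R G \<in> W A" by (rule W_scale[OF G])
    show "seq Th (a n) (b n) \<in> W A" for n by (rule seq_W[OF aW bW])
    have lim0: "(\<lambda>n. (s + t) *\<^sub>R G + (s * t / real n) *\<^sub>R seq Th G G) \<longlonglongrightarrow> (s + t) *\<^sub>R G + 0 *\<^sub>R seq Th G G"
      by (intro tendsto_add tendsto_const tendsto_scaleR lim_const_over_n)
    have ev2: "\<forall>\<^sub>F n in sequentially. (s + t) *\<^sub>R G + (s * t / real n) *\<^sub>R seq Th G G
              = real n *\<^sub>R (seq Th (a n) (b n) - ident Th A)"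
      unfolding eventually_sequentially
    proof (intro exI[of _ 1] allI impI)
      fix n :: nat assume "1 \<le> n"
      then have n: "real n \<noteq> 0" by simp
      show "(s + t) *\<^sub>R G + (s * t / real n) *\<^sub>R seq Th G G = real n *\<^sub>R (seq Th (a n) (b n) - ident Th A)"
      proof -
        have "seq Th (a n) (b n) - ident Th A = (s / real n + t / real n) *\<^sub>R G + (s / real n * (t / real n)) *\<^sub>R seq Th G G"
          unfolding a_def b_def seq_eG[OF G] by simp
        then have "real n *\<^sub>R (seq Th (a n) (b n) - ident Th A)
           = (real n * (s / real n + t / real n)) *\<^sub>R G + (real n * (s / real n * (t / real n))) *\<^sub>R seq Th G G"
          by (simp add: scaleR_add_right)
        moreover have "real n * (s / real n + t / real n) = s + t" using n by (simp add: field_simps)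
        moreover have "real n * (s / real n * (t / real n)) = s * t / real n" using n by (simp add: field_simps)
        ultimately show ?thesis by simp
      qed
    qed
    have lim0': "(\<lambda>n. (s + t) *\<^sub>R G + (s * t / real n) *\<^sub>R seq Th G G) \<longlonglongrightarrow> (s + t) *\<^sub>R G"
      using lim0 by simp
    show "(\<lambda>n. real n *\<^sub>R (seq Th (a n) (b n) - ident Th A)) \<longlonglongrightarrow> (s + t) *\<^sub>R G"
      by (rule Lim_transform_eventually[OF lim0' ev2])
  qed
  have "(\<lambda>n. opow Th A (seq Th (a n) (b n)) n) = (\<lambda>n. seq Th (opow Th A (a n) n) (opow Th A (b n) n))"
    using pw_mult[OF aW bW comm] by blast
  with l1 have l1': "(\<lambda>n. opow Th A (seq Th (a n) (b n)) n) \<longlonglongrightarrow> seq Th (opt_exp Th A (s *\<^sub>R G)) (opt_exp Th A (t *\<^sub>R G))"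
    by simp
  show ?thesis by (rule LIMSEQ_unique[OF l2 l1'])
qed

lemma exp_near_e: assumes Z: "Z \<in> W A"
  shows "norm (opt_exp Th A Z - ident Th A) \<le> norm Z + norm (ident Th A) * (exp (Kc A * norm Z) - (1 + Kc A * norm Z))"
proof -
  have p1: "opow Th A (ident Th A + Z) 1 = ident Th A + Z" using e_right[OF W_add[OF e_W Z]] by simp
  have "norm (opt_exp Th A Z - (ident Th A + Z)) \<le> norm (ident Th A) * (exp (Kc A * norm Z) - (1 + Kc A * norm Z))"
    using exp_approx[OF Z, of 1] p1 by simp
  moreover have "norm (opt_exp Th A Z - ident Th A) \<le> norm (opt_exp Th A Z - (ident Th A + Z)) + norm Z"
  proof -
    have "opt_exp Th A Z - ident Th A = (opt_exp Th A Z - (ident Th A + Z)) + Z" by simp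
    then show ?thesis using norm_triangle_ineq[of "opt_exp Th A Z - (ident Th A + Z)" Z] by simp
  qed
  ultimately show ?thesis by simp
qed

lemma exp_cont: assumes G: "G \<in> W A"
  shows "continuous_on UNIV (\<lambda>t. opt_exp Th A (t *\<^sub>R G))"
proof -
  define U where "U t = opt_exp Th A (t *\<^sub>R G)" for t
  have UW: "U t \<in> W A" for t unfolding U_def by (intro exp_series(2) W_scale G)
  define K where "K = Kc A"
  define E where "E = norm (ident Th A)"
  define h where "h x = \<bar>x\<bar> * norm G + E * (exp (K * (\<bar>x\<bar> * norm G)) - (1 + K * (\<bar>x\<bar> * norm G)))" for x
  have hl: "h \<midarrow>0\<rightarrow> \<bar>0\<bar> * norm G + E * (exp (K * (\<bar>0\<bar> * norm G)) - (1 + K * (\<bar>0\<bar> * norm G)))"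
    unfolding h_def by (intro tendsto_intros)
  then have h0: "h \<midarrow>0\<rightarrow> 0" by simp
  have ev: "\<forall>\<^sub>F x in at 0. norm (U x - ident Th A) \<le> h x"
    by (intro always_eventually allI) (use exp_near_e[OF W_scale[OF G]] in \<open>simp add: U_def h_def K_def E_def\<close>)
  have "((\<lambda>x. U x - ident Th A) \<longlongrightarrow> 0) (at 0)" by (rule Lim_null_comparison[OF ev h0])
  then have U0: "U \<midarrow>0\<rightarrow> ident Th A" by (rule LIM_zero_cancel)
  have "isCont U t" for t
  proof -
    have "((\<lambda>x. seq Th (U t) (U x)) \<longlongrightarrow> seq Th (U t) (ident Th A)) (at 0)"
    proof (rule seq_tendsto[OF tendsto_const U0])
      show "\<forall>\<^sub>F x in at 0. U t \<in> W A" "\<forall>\<^sub>F x in at 0. U x \<in> W A"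
        by (rule always_eventually, intro allI UW)+
    qed (auto intro: UW e_W)
    moreover have "seq Th (U t) (U x) = U (t + x)" for x unfolding U_def by (rule exp_add[OF G, symmetric])
    ultimately show ?thesis unfolding isCont_iff using e_right[OF UW] by simp
  qed
  then show ?thesis unfolding U_def[symmetric] by (intro continuous_at_imp_continuous_on) auto
qed

end


lemma lin_inj_surj:
  fixes f :: "'a::real_vector \<Rightarrow> 'a"
  assumes B: "finite B" "independent B" and f: "linear f" "f ` span B \<subseteq> span B" "inj_on f (span B)"
  shows "span B \<subseteq> f ` span B"
proof
  fix y assume y: "y \<in> span B"
  have ind: "independent (f ` B)" by (rule real_vector.linear_independent_injective_image[OF f(1) B(2) f(3)])
  have injB: "inj_on f B" using inj_on_subset[OF f(3) span_superset] .
  have card: "card (f ` B) = card B" using card_image[OF injB] .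
  have "f ` B \<subseteq> f ` span B" by (rule image_mono[OF span_superset])
  then have sub: "f ` B \<subseteq> span B" using f(2) by (rule order_trans)
  have "y \<in> span (f ` B)"
  proof (rule ccontr)
    assume n: "y \<notin> span (f ` B)"
    have yn: "y \<notin> f ` B" using n span_superset[of "f ` B"] by blast
    have ii: "independent (insert y (f ` B))" by (subst real_vector.independent_insert) (simp add: yn ind n)
    have ss: "insert y (f ` B) \<subseteq> span B" using sub y by blast
    have "finite (insert y (f ` B)) \<and> card (insert y (f ` B)) \<le> card B"
      by (rule independent_span_bound[OF B(1) ii ss])
    moreover have "card (insert y (f ` B)) = card B + 1" using card_insert_disjoint[OF finite_imageI[OF B(1)] yn] card by simp
    ultimately show False by simp
  qed
  moreover have "span (f ` B) = f ` span B" by (rule span_linear_image[OF f(1)])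
  ultimately show "y \<in> f ` span B" by simp
qed

lemma vd_sub_linear:
  fixes f :: "real \<Rightarrow> 'a::real_normed_vector" and L :: "'a \<Rightarrow> 'b::real_normed_vector"
  assumes fd: "(f has_vector_derivative f') (at x)" and fV: "\<And>t. f t \<in> V" and f'V: "f' \<in> V"
    and V: "subspace V" and L: "linear L" and Lb: "\<And>v. v \<in> V \<Longrightarrow> norm (L v) \<le> K * norm v"
  shows "((\<lambda>t. L (f t)) has_vector_derivative L f') (at x)"
proof -
  from fd have q: "(\<lambda>h. norm (f (x + h) - f x - h *\<^sub>R f') / norm h) \<midarrow>0\<rightarrow> 0"
    unfolding has_vector_derivative_def has_derivative_at by simp
  have bl: "bounded_linear (\<lambda>h. h *\<^sub>R L f')" by (rule bounded_linear_scaleR_left)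
  have ev: "\<forall>\<^sub>F h in at 0. norm (norm (L (f (x + h)) - L (f x) - h *\<^sub>R L f') / norm h)
               \<le> max K 0 * (norm (f (x + h) - f x - h *\<^sub>R f') / norm h)"
  proof (intro always_eventually allI)
    fix h :: real
    have mem: "f (x + h) - f x - h *\<^sub>R f' \<in> V"
      using fV f'V V by (intro real_vector.subspace_diff real_vector.subspace_scale) auto
    have eq: "L (f (x + h)) - L (f x) - h *\<^sub>R L f' = L (f (x + h) - f x - h *\<^sub>R f')"
      by (simp add: linear_diff[OF L] linear_scale[OF L])
    have "norm (L (f (x + h) - f x - h *\<^sub>R f')) \<le> K * norm (f (x + h) - f x - h *\<^sub>R f')" by (rule Lb[OF mem])
    also have "\<dots> \<le> max K 0 * norm (f (x + h) - f x - h *\<^sub>R f')" by (intro mult_right_mono) auto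
    finally have "norm (L (f (x + h)) - L (f x) - h *\<^sub>R L f') / norm h \<le> max K 0 * norm (f (x + h) - f x - h *\<^sub>R f') / norm h"
      unfolding eq by (intro divide_right_mono) auto
    then show "norm (norm (L (f (x + h)) - L (f x) - h *\<^sub>R L f') / norm h)
               \<le> max K 0 * (norm (f (x + h) - f x - h *\<^sub>R f') / norm h)" by simp
  qed
  have "(\<lambda>h. max K 0 * (norm (f (x + h) - f x - h *\<^sub>R f') / norm h)) \<midarrow>0\<rightarrow> max K 0 * 0"
    by (intro tendsto_mult tendsto_const q)
  then have "(\<lambda>h. norm (L (f (x + h)) - L (f x) - h *\<^sub>R L f') / norm h) \<midarrow>0\<rightarrow> 0"
    by (intro Lim_null_comparison[OF ev]) simp
  then show ?thesis unfolding has_vector_derivative_def has_derivative_at using bl by simp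
qed

lemma sub_tendsto:
  fixes L :: "'a::real_normed_vector \<Rightarrow> 'b::real_normed_vector"
  assumes "(f \<longlongrightarrow> l) F" "\<forall>\<^sub>F x in F. f x \<in> V" "l \<in> V"
    "\<And>v w. v \<in> V \<Longrightarrow> w \<in> V \<Longrightarrow> L v - L w = L (v - w)"
    "\<And>v. v \<in> V \<Longrightarrow> norm (L v) \<le> K * norm v" "subspace V"
  shows "((\<lambda>x. L (f x)) \<longlongrightarrow> L l) F"
proof -
  have ev: "\<forall>\<^sub>F x in F. norm (L (f x) - L l) \<le> max K 0 * norm (f x - l)"
    using assms(2)
  proof eventually_elim
    case (elim x)
    have "norm (L (f x) - L l) = norm (L (f x - l))" using assms(4)[OF elim assms(3)] by simp
    also have "\<dots> \<le> K * norm (f x - l)" using assms(5) real_vector.subspace_diff[OF assms(6) elim assms(3)] by blast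
    also have "\<dots> \<le> max K 0 * norm (f x - l)" by (intro mult_right_mono) auto
    finally show ?case .
  qed
  have "((\<lambda>x. max K 0 * norm (f x - l)) \<longlongrightarrow> max K 0 * 0) F"
    by (intro tendsto_mult tendsto_const tendsto_norm_zero LIM_zero assms(1))
  then have "((\<lambda>x. L (f x) - L l) \<longlongrightarrow> 0) F" by (intro Lim_null_comparison[OF ev]) simp
  then show ?thesis by (rule LIM_zero_cancel)
qed



context optax
begin

lemma opsg_deriv:
  assumes St: "\<And>t. S t \<in> transf Th A A" and hom: "\<And>s t. S (s + t) = seq Th (S s) (S t)"
    and cont: "continuous_on UNIV S" and S0: "S 0 = ident Th A"
  shows "\<exists>D\<in>W A. (S has_vector_derivative D) (at 0)"
proof -
  obtain B where B: "finite B" "independent B" "B \<subseteq> W A" "span B = W A" by (rule W_basis)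
  define c where "c x u = representation B x u" for x u
  have SW: "S t \<in> W A" for t by (rule transf_W[OF St])
  have BW: "u \<in> B \<Longrightarrow> u \<in> W A" for u using B(3) by blast
  have c_sum: "x = (\<Sum>u\<in>B. c x u *\<^sub>R u)" if "x \<in> W A" for x
    using real_vector.sum_representation_eq[OF B(2) _ B(1) order_refl, of x] that B(4) by (simp add: c_def)
  have c_diff: "c (x - y) u = c x u - c y u" if "x \<in> W A" "y \<in> W A" for x y u
    using real_vector.representation_diff[OF B(2), of y x] that B(4) by (simp add: c_def)
  have c_scale: "c (r *\<^sub>R x) u = r * c x u" if "x \<in> W A" for x r u
    using real_vector.representation_scale[OF B(2), of x r] that B(4) by (simp add: c_def)
  have c_sumI: "c (\<Sum>i\<in>I. v i) u = (\<Sum>i\<in>I. c (v i) u)" if "\<And>i. i \<in> I \<Longrightarrow> v i \<in> W A" for I v u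
    using real_vector.representation_sum[OF B(2), of I v] that B(4) by (simp add: c_def)
  obtain Cc where Cc: "Cc \<ge> 0" "\<And>x u. x \<in> W A \<Longrightarrow> u \<in> B \<Longrightarrow> \<bar>c x u\<bar> \<le> Cc * norm x"
  proof -
    obtain C where C: "C \<ge> 0" "\<forall>x\<in>span B. \<exists>c'. x = (\<Sum>v\<in>B. c' v *\<^sub>R v) \<and> (\<forall>v\<in>B. \<bar>c' v\<bar> \<le> C * norm x)"
      using fin_span_coords[OF B(1)] by blast
    have "\<bar>c x u\<bar> \<le> C * norm x" if xu: "x \<in> W A" "u \<in> B" for x u
    proof -
      obtain c' where c': "x = (\<Sum>v\<in>B. c' v *\<^sub>R v)" "\<forall>v\<in>B. \<bar>c' v\<bar> \<le> C * norm x"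
        using C(2) xu(1) B(4) by blast
      define f where "f v = (if v \<in> B then c' v else 0)" for v
      have "representation B x = f"
      proof (rule real_vector.representation_eqI[OF B(2)])
        show "x \<in> span B" using xu B(4) by simp
        show "\<And>b. f b \<noteq> 0 \<Longrightarrow> b \<in> B" by (auto simp: f_def split: if_splits)
        have "{b. f b \<noteq> 0} \<subseteq> B" by (auto simp: f_def split: if_splits)
        then show "finite {b. f b \<noteq> 0}" using B(1) by (rule finite_subset)
        have "(\<Sum>b | f b \<noteq> 0. f b *\<^sub>R b) = (\<Sum>b\<in>B. f b *\<^sub>R b)"
          by (rule sum.mono_neutral_left) (use B(1) \<open>{b. f b \<noteq> 0} \<subseteq> B\<close> in auto)
        also have "\<dots> = x" using c'(1) by (simp add: f_def)
        finally show "(\<Sum>b | f b \<noteq> 0. f b *\<^sub>R b) = x" .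
      qed
      then show ?thesis using c'(2) xu(2) by (simp add: c_def f_def)
    qed
    then show ?thesis using that C(1) by blast
  qed
  have c_tend: "((\<lambda>x. c (g x) u) \<longlongrightarrow> c l u) F" if "(g \<longlongrightarrow> l) F" "\<forall>\<^sub>F x in F. g x \<in> W A" "l \<in> W A" "u \<in> B"
    for g l F u
  proof (rule sub_tendsto[OF that(1-3), where K = Cc])
    show "\<And>v w. v \<in> W A \<Longrightarrow> w \<in> W A \<Longrightarrow> c v u - c w u = c (v - w) u" using c_diff by simp
    show "\<And>v. v \<in> W A \<Longrightarrow> norm (c v u) \<le> Cc * norm v" using Cc(2) that(4) by simp
    show "subspace (W A)" by (rule W_subspace)
  qed
  have Scont: "isCont S t" for t using cont by (simp add: continuous_on_eq_continuous_at)
  define \<phi> where "\<phi> u s = c (S s) u" for u s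
  have \<phi>cont: "continuous_on X (\<phi> u)" if "u \<in> B" for u X
  proof -
    have "isCont (\<phi> u) t" for t
      unfolding isCont_def \<phi>_def
      by (rule c_tend[OF Scont[unfolded isCont_def] _ SW that]) (auto intro: always_eventually SW)
    then show ?thesis by (intro continuous_at_imp_continuous_on) auto
  qed
  have \<phi>int: "\<phi> u integrable_on {a..b}" if "u \<in> B" for u a b
    by (rule integrable_continuous_real[OF \<phi>cont[OF that]])
  define \<Sigma>0 where "\<Sigma>0 = (\<Sum>u\<in>B. norm u)"
  have \<Sigma>0: "\<Sigma>0 \<ge> 0" unfolding \<Sigma>0_def by (simp add: sum_nonneg)
  define K where "K = Kc A"
  have K1: "K \<ge> 1" unfolding K_def by (rule Kc_ge1)
  define \<epsilon> where "\<epsilon> = 1 / (2 * K * (Cc * \<Sigma>0 + 1))"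
  have "Cc * \<Sigma>0 \<ge> 0" using Cc(1) \<Sigma>0 by simp
  then have "2 * K * (Cc * \<Sigma>0 + 1) > 0" using K1 by (intro mult_pos_pos) auto
  then have \<epsilon>: "\<epsilon> > 0" unfolding \<epsilon>_def by simp
  obtain d where d: "d > 0" "\<And>s. dist s 0 < d \<Longrightarrow> dist (S s) (S 0) < \<epsilon>"
    using Scont[of 0] \<epsilon> unfolding continuous_at_eps_delta by blast
  define h where "h = min (d / 2) 1"
  have h: "h > 0" "h \<le> 1" "h < d" unfolding h_def using d by auto
  have Sclose: "norm (S s - ident Th A) < \<epsilon>" if "s \<in> {0..h}" for s
    using d(2)[of s] that h S0 by (auto simp: dist_norm)
  define mv where "mv u = integral {0..h} (\<phi> u)" for u
  define M where "M = (\<Sum>u\<in>B. mv u *\<^sub>R u)"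
  have MW: "M \<in> W A" unfolding M_def by (intro W_sum W_scale BW)
  define P where "P = (1 / h) *\<^sub>R M"
  have PW: "P \<in> W A" unfolding P_def by (intro W_scale MW)
  have coef: "\<bar>(1 / h) * mv u - c (ident Th A) u\<bar> \<le> Cc * \<epsilon>" if u: "u \<in> B" for u
  proof -
    have i1: "(\<lambda>s. \<phi> u s - c (ident Th A) u) integrable_on {0..h}"
      by (intro integrable_diff \<phi>int u integrable_const_ivl)
    have eq: "mv u - h * c (ident Th A) u = integral {0..h} (\<lambda>s. \<phi> u s - c (ident Th A) u)"
      unfolding mv_def using integral_diff[OF \<phi>int[OF u] integrable_const_ivl[of "c (ident Th A) u" 0 h]] h
      by simp
    have "norm (integral {0..h} (\<lambda>s. \<phi> u s - c (ident Th A) u)) \<le> (Cc * \<epsilon>) * Henstock_Kurzweil_Integration.content (cbox 0 h)"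
    proof (rule has_integral_bound)
      show "0 \<le> Cc * \<epsilon>" using Cc(1) \<epsilon> by simp
      show "((\<lambda>s. \<phi> u s - c (ident Th A) u) has_integral integral {0..h} (\<lambda>s. \<phi> u s - c (ident Th A) u)) (cbox 0 h)"
        using integrable_integral[OF i1] by simp
      fix s assume "s \<in> cbox 0 h"
      then have s: "s \<in> {0..h}" by simp
      have "\<phi> u s - c (ident Th A) u = c (S s - ident Th A) u" unfolding \<phi>_def using c_diff[OF SW e_W] by simp
      also have "norm \<dots> \<le> Cc * norm (S s - ident Th A)" using Cc(2)[OF W_diff[OF SW e_W] u] by simp
      also have "\<dots> \<le> Cc * \<epsilon>" using Sclose[OF s] Cc(1) by (intro mult_left_mono) auto
      finally show "norm (\<phi> u s - c (ident Th A) u) \<le> Cc * \<epsilon>" .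
    qed
    then have "\<bar>mv u - h * c (ident Th A) u\<bar> \<le> Cc * \<epsilon> * h" using eq h by simp
    moreover have "(1 / h) * mv u - c (ident Th A) u = (mv u - h * c (ident Th A) u) / h" using h by (simp add: field_simps)
    ultimately show ?thesis using h by (simp add: divide_le_eq abs_divide)
  qed
  have Pe: "norm (P - ident Th A) \<le> 1 / (2 * K)"
  proof -
    have "P - ident Th A = (\<Sum>u\<in>B. ((1 / h) * mv u - c (ident Th A) u) *\<^sub>R u)"
      using c_sum[OF e_W] unfolding P_def M_def
      by (simp add: scaleR_sum_right scaleR_diff_left sum_subtractf)
    then have "norm (P - ident Th A) \<le> (\<Sum>u\<in>B. norm (((1 / h) * mv u - c (ident Th A) u) *\<^sub>R u))"
      by (simp only:) (rule norm_sum)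
    also have "\<dots> \<le> (\<Sum>u\<in>B. Cc * \<epsilon> * norm u)"
      using coef by (intro sum_mono) (simp add: mult_right_mono)
    also have "\<dots> = Cc * \<epsilon> * \<Sigma>0" unfolding \<Sigma>0_def by (simp add: sum_distrib_left)
    also have "\<dots> \<le> 1 / (2 * K)"
    proof -
      have "Cc * \<epsilon> * \<Sigma>0 = (Cc * \<Sigma>0) / (2 * K * (Cc * \<Sigma>0 + 1))" unfolding \<epsilon>_def by simp
      also have "\<dots> \<le> (Cc * \<Sigma>0 + 1) / (2 * K * (Cc * \<Sigma>0 + 1))"
        using K1 Cc(1) \<Sigma>0 by (intro divide_right_mono) auto
      also have "\<dots> = 1 / (2 * K)" using K1 \<open>Cc * \<Sigma>0 \<ge> 0\<close> by simp
      finally show ?thesis .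
    qed
    finally show ?thesis .
  qed
  \<comment> \<open>left multiplication by P is injective, hence surjective\<close>
  have inj: "inj_on (seq Th P) (W A)"
  proof (rule inj_onI)
    fix x y assume x: "x \<in> W A" and y: "y \<in> W A" and xy: "seq Th P x = seq Th P y"
    define z where "z = x - y"
    have zW: "z \<in> W A" unfolding z_def by (rule W_diff[OF x y])
    have "seq Th P z = 0" unfolding z_def using xy by (simp add: bil_simps)
    then have "z = seq Th (ident Th A - P) z" using e_left[OF zW] by (simp add: bil_simps)
    then have "norm z \<le> K * norm (ident Th A - P) * norm z"
      using Kc_bound[OF W_diff[OF e_W PW] zW] by (simp add: K_def)
    also have "\<dots> \<le> K * (1 / (2 * K)) * norm z"
      using Pe K1 by (intro mult_right_mono mult_left_mono) (auto simp: norm_minus_commute)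
    also have "\<dots> = norm z / 2" using K1 by simp
    finally have "norm z = 0" by simp
    then show "x = y" unfolding z_def by simp
  qed
  have sub1: "seq Th P ` span B \<subseteq> span B"
  proof (rule image_subsetI)
    fix x assume "x \<in> span B"
    then show "seq Th P x \<in> span B" using seq_W[OF PW, of x] B(4) by simp
  qed
  have inj': "inj_on (seq Th P) (span B)" using inj unfolding B(4) .
  have "span B \<subseteq> seq Th P ` span B" by (rule lin_inj_surj[OF B(1) B(2) lin_r sub1 inj'])
  then have "W A \<subseteq> seq Th P ` W A" unfolding B(4) .
  then have "ident Th A \<in> seq Th P ` W A" using e_W by (rule subsetD)
  then obtain N0 where N0': "N0 \<in> W A" "ident Th A = seq Th P N0" by (rule imageE)
  then have N0: "N0 \<in> W A" "seq Th P N0 = ident Th A" by simp_all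
  define N' where "N' = (1 / h) *\<^sub>R N0"
  have N'W: "N' \<in> W A" unfolding N'_def by (intro W_scale N0(1))
  have MN: "seq Th M N' = ident Th A"
  proof -
    have "M = h *\<^sub>R P" unfolding P_def using h by simp
    then show ?thesis unfolding N'_def using N0(2) h by (simp add: bil_simps)
  qed
  define J where "J t = seq Th (S t) M" for t
  have JW: "J t \<in> W A" for t unfolding J_def by (rule seq_W[OF SW MW])
  have SJ: "S t = seq Th (J t) N'" for t
  proof -
    have "seq Th (J t) N' = seq Th (S t) (seq Th M N')" unfolding J_def by (rule assoc_W[OF SW MW N'W, symmetric])
    also have "\<dots> = S t" unfolding MN by (rule e_right[OF SW])
    finally show ?thesis by (rule sym)
  qed
  have cJ: "c (J t) u = integral {t..h + t} (\<phi> u)" if u: "u \<in> B" for t u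
  proof -
    have J1: "J t = (\<Sum>v\<in>B. mv v *\<^sub>R seq Th (S t) v)"
      unfolding J_def M_def by (simp add: linear_sum[OF lin_r] bil_simps)
    have "c (J t) u = (\<Sum>v\<in>B. c (mv v *\<^sub>R seq Th (S t) v) u)"
      unfolding J1 by (rule c_sumI) (intro W_scale seq_W[OF SW BW])
    also have "\<dots> = (\<Sum>v\<in>B. mv v * c (seq Th (S t) v) u)"
      by (intro sum.cong refl c_scale seq_W[OF SW BW])
    also have "\<dots> = (\<Sum>v\<in>B. integral {0..h} (\<lambda>s. \<phi> v s * c (seq Th (S t) v) u))"
      unfolding mv_def by (simp only: integral_mult_left)
    also have "\<dots> = integral {0..h} (\<lambda>s. \<Sum>v\<in>B. \<phi> v s * c (seq Th (S t) v) u)"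
      by (rule integral_sum[symmetric]) (intro B(1), intro integrable_on_mult_left \<phi>int)
    also have "\<dots> = integral {0..h} (\<lambda>s. \<phi> u (t + s))"
    proof (rule integral_cong)
      fix s
      have "seq Th (S t) (S s) = seq Th (S t) (\<Sum>v\<in>B. c (S s) v *\<^sub>R v)"
        using c_sum[OF SW, of s] by (rule arg_cong)
      also have "\<dots> = (\<Sum>v\<in>B. c (S s) v *\<^sub>R seq Th (S t) v)"
        by (simp only: linear_sum[OF lin_r] bil_simps)
      finally have "c (seq Th (S t) (S s)) u = c (\<Sum>v\<in>B. c (S s) v *\<^sub>R seq Th (S t) v) u" by simp
      also have "\<dots> = (\<Sum>v\<in>B. c (c (S s) v *\<^sub>R seq Th (S t) v) u)"
        by (rule c_sumI) (intro W_scale seq_W[OF SW BW])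
      also have "\<dots> = (\<Sum>v\<in>B. c (S s) v * c (seq Th (S t) v) u)"
        by (intro sum.cong refl c_scale seq_W[OF SW BW])
      finally have "c (seq Th (S t) (S s)) u = (\<Sum>v\<in>B. c (S s) v * c (seq Th (S t) v) u)" .
      then show "(\<Sum>v\<in>B. \<phi> v s * c (seq Th (S t) v) u) = \<phi> u (t + s)"
        unfolding \<phi>_def hom by simp
    qed
    also have "\<dots> = integral {0..h} (\<phi> u \<circ> (+) t)" by (simp add: o_def)
    also have "\<dots> = integral {t..h + t} (\<phi> u)" using integral_shift_Icc_real[of 0 h "\<phi> u" t] by simp
    finally show ?thesis .
  qed
  define F where "F u x = integral {-2..x} (\<phi> u)" for u x
  have Fd: "(F u has_real_derivative \<phi> u x) (at x)" if "u \<in> B" "-2 < x" "x < 2" for u x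
  proof -
    have "(F u has_real_derivative \<phi> u x) (at x within {-2..2})"
      unfolding F_def by (rule integral_has_real_derivative[OF \<phi>cont[OF that(1)]]) (use that in auto)
    then show ?thesis using at_within_Icc_at[of "-2" x 2] that by simp
  qed
  have cJd: "((\<lambda>t. c (J t) u) has_real_derivative (\<phi> u h - \<phi> u 0)) (at 0)" if u: "u \<in> B" for u
  proof -
    have d1: "((\<lambda>t. F u (t + h)) has_real_derivative \<phi> u h) (at 0)"
      using Fd[OF u, of "0 + h"] h DERIV_shift[of "F u" "\<phi> u h" 0 h] by simp
    have d2: "(F u has_real_derivative \<phi> u 0) (at 0)" using Fd[OF u, of 0] by simp
    have d3: "((\<lambda>t. F u (t + h) - F u t) has_real_derivative (\<phi> u h - \<phi> u 0)) (at 0)"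
      by (rule DERIV_diff[OF d1 d2])
    show ?thesis
    proof (rule has_field_derivative_transform_within_open[OF d3, of "{-1<..<1}"])
      fix t :: real assume t: "t \<in> {-1<..<1}"
      have "integral {-2..t} (\<phi> u) + integral {t..h + t} (\<phi> u) = integral {-2..h + t} (\<phi> u)"
        using Henstock_Kurzweil_Integration.integral_combine[where a="-2" and c=t and b="h + t" and f="\<phi> u"] t h \<phi>int[OF u, of "-2" "h + t"] by simp
      then show "F u (t + h) - F u t = c (J t) u" unfolding F_def cJ[OF u] by (simp add: algebra_simps)
    qed auto
  qed
  define J' where "J' = (\<Sum>u\<in>B. (\<phi> u h - \<phi> u 0) *\<^sub>R u)"
  have J'W: "J' \<in> W A" unfolding J'_def by (intro W_sum W_scale BW)
  have Jeq: "J = (\<lambda>t. \<Sum>u\<in>B. c (J t) u *\<^sub>R u)" by (rule ext) (rule c_sum[OF JW])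
  have Jd: "(J has_vector_derivative J') (at 0)"
  proof -
    have "((\<lambda>t. \<Sum>u\<in>B. c (J t) u *\<^sub>R u) has_vector_derivative J') (at 0)"
      unfolding J'_def
    proof (rule has_vector_derivative_sum)
      fix u assume u: "u \<in> B"
      show "((\<lambda>t. c (J t) u *\<^sub>R u) has_vector_derivative (\<phi> u h - \<phi> u 0) *\<^sub>R u) (at 0)"
        using has_vector_derivative_scaleR[OF cJd[OF u] has_vector_derivative_const[of u]] by simp
    qed
    then show ?thesis unfolding Jeq[symmetric] .
  qed
  have Sd: "((\<lambda>t. seq Th (J t) N') has_vector_derivative seq Th J' N') (at 0)"
  proof (rule vd_sub_linear[OF Jd JW J'W W_subspace lin_l])
    fix v assume "v \<in> W A"
    then show "norm (seq Th v N') \<le> (K * norm N') * norm v"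
      using Kc_bound[OF _ N'W, of v] by (simp add: K_def algebra_simps)
  qed
  have "S = (\<lambda>t. seq Th (J t) N')" by (rule ext) (rule SJ)
  then have "(S has_vector_derivative seq Th J' N') (at 0)" using Sd by (simp only:)
  moreover have "seq Th J' N' \<in> W A" by (rule seq_W[OF J'W N'W])
  ultimately show ?thesis by blast
qed

end


theorem theorem1:
  fixes Th :: "('s, 't::real_normed_vector) opt"
    and A A' :: 's and S :: "real \<Rightarrow> 't" and u \<sigma> :: 't
  assumes "opt_axioms Th"
    and "collision_model Th A A' S u"
    and "\<sigma> \<in> det Th (triv Th) A'"
  shows "\<exists>U. (\<forall>t. (\<lambda>n. opow Th A (collision_channel Th A S u \<sigma> (t / real n)) n) \<longlonglongrightarrow> U t)
           \<and> one_param_subgroup Th A U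
           \<and> (\<forall>t. U t = opt_exp Th A (t *\<^sub>R collision_generator Th A S u \<sigma>))"
proof -
  interpret optax Th using assms(1) by (rule optax.intro)
  define X where "X = tens Th A A'"
  have opsg: "one_param_subgroup Th X S" and udet: "u \<in> det Th A' (triv Th)"
    using assms(2) unfolding collision_model_def X_def by auto
  have Srev: "\<And>t. S t \<in> rev_group Th X" and hom: "\<And>s t. S (s + t) = seq Th (S s) (S t)"
    and Scont: "continuous_on UNIV S"
    using opsg unfolding one_param_subgroup_def by auto
  have St: "\<And>t. S t \<in> transf Th X X" using Srev unfolding rev_group_def by auto
  have S0: "S 0 = ident Th X"
  proof -
    obtain R where R: "R \<in> transf Th X X" "seq Th R (S 0) = ident Th X"
      using Srev[of 0] unfolding rev_group_def by auto
    have SS: "seq Th (S 0) (S 0) = S 0" using hom[of 0 0] by simp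
    have "ident Th X = seq Th R (seq Th (S 0) (S 0))" using R(2) SS by simp
    also have "\<dots> = seq Th (seq Th R (S 0)) (S 0)" by (rule ax_assoc[OF St St R(1)])
    also have "\<dots> = S 0" using R(2) ax_unitL[OF St[of 0]] by simp
    finally show ?thesis by (rule sym)
  qed
  obtain D where D: "D \<in> W X" "(S has_vector_derivative D) (at 0)"
    using opsg_deriv[OF St hom Scont S0] by blast
  have vd: "vector_derivative S (at 0) = D" by (rule vector_derivative_at[OF D(2)])
  define P where "P = par Th (ident Th A) u"
  define Q where "Q = par Th (ident Th A) \<sigma>"
  have uT: "u \<in> transf Th A' (triv Th)" by (rule det_transf[OF udet])
  have \<sigma>T: "\<sigma> \<in> transf Th (triv Th) A'" by (rule det_transf[OF assms(3)])
  have PT: "P \<in> transf Th X A" using ax_par[OF ax_ident[of A] uT] unfolding P_def X_def ax_tens1 .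
  have QT: "Q \<in> transf Th A X" using ax_par[OF ax_ident[of A] \<sigma>T] unfolding Q_def X_def ax_tens1 .
  define \<Phi> where "\<Phi> Y = seq Th P (seq Th Y Q)" for Y
  have lin\<Phi>: "linear \<Phi>" unfolding \<Phi>_def by (rule linearI) (simp_all add: bil_simps)
  have \<Phi>T: "\<Phi> Y \<in> transf Th A A" if "Y \<in> transf Th X X" for Y
    unfolding \<Phi>_def by (rule ax_seq[OF ax_seq[OF QT that] PT])
  have \<Phi>W: "\<Phi> Y \<in> W A" if "Y \<in> W X" for Y
  proof -
    have "\<Phi> ` transf Th X X \<subseteq> span (transf Th A A)" using \<Phi>T by (auto intro: span_base)
    from lin_span_map[OF lin\<Phi> this] that show ?thesis unfolding W_def .
  qed
  obtain K\<Phi> where K\<Phi>: "\<And>Y. Y \<in> W X \<Longrightarrow> norm (\<Phi> Y) \<le> K\<Phi> * norm Y"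
  proof -
    obtain BX where BX: "finite BX" "span BX = W X" by (rule W_basis)
    show ?thesis using fin_linear_bound[OF BX(1) lin\<Phi>] BX(2) that by auto
  qed
  have \<Phi>e: "\<Phi> (ident Th X) = ident Th A"
  proof -
    have "[\<sigma>] \<in> tests Th (triv Th) A'" using assms(3) unfolding det_def by simp
    moreover have "[u] \<in> tests Th A' (triv Th)" using udet unfolding det_def by simp
    ultimately have "[seq Th y x. x \<leftarrow> [\<sigma>], y \<leftarrow> [u]] \<in> tests Th (triv Th) (triv Th)" by (rule ax_tests_seq)
    then have "seq Th u \<sigma> = ident Th (triv Th)" using ax_triv_sum by fastforce
    have "seq Th P Q = par Th (seq Th (ident Th A) (ident Th A)) (seq Th u \<sigma>)"
      unfolding P_def Q_def by (rule ax_interchange[OF ax_ident ax_ident \<sigma>T uT, symmetric])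
    also have "\<dots> = ident Th A"
      using \<open>seq Th u \<sigma> = ident Th (triv Th)\<close> ax_unitL[OF ax_ident[of A]] ax_par_triv[OF ax_ident[of A]] by simp
    finally have "seq Th P Q = ident Th A" .
    then show ?thesis unfolding \<Phi>_def using ax_unitL[OF QT] by simp
  qed
  have C_eq: "collision_channel Th A S u \<sigma> \<tau> = \<Phi> (S \<tau>)" for \<tau>
    unfolding collision_channel_def \<Phi>_def P_def Q_def ..
  define G where "G = \<Phi> D"
  have G_eq: "collision_generator Th A S u \<sigma> = G"
    unfolding collision_generator_def G_def \<Phi>_def P_def Q_def vd ..
  have GW: "G \<in> W A" unfolding G_def by (rule \<Phi>W[OF D(1)])
  have SW: "S t \<in> W X" for t by (rule transf_W[OF St])
  have CT: "\<Phi> (S t) \<in> transf Th A A" for t by (rule \<Phi>T[OF St])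
  define U where "U t = opt_exp Th A (t *\<^sub>R G)" for t
  have Slim: "(\<lambda>n. real n *\<^sub>R (S (t / real n) - ident Th X)) \<longlonglongrightarrow> t *\<^sub>R D" for t
  proof (cases "t = 0")
    case True then show ?thesis using S0 by simp
  next
    case False
    have q: "((\<lambda>h. norm (S (0 + h) - S 0 - h *\<^sub>R D) / norm h) \<longlongrightarrow> 0) (at 0)"
      using D(2) unfolding has_vector_derivative_def has_derivative_at by simp
    have hn: "filterlim (\<lambda>n. t / real n) (at 0) sequentially"
    proof (rule filterlim_atI)
      show "(\<lambda>n. t / real n) \<longlonglongrightarrow> 0" by (rule lim_const_over_n)
      show "\<forall>\<^sub>F n in sequentially. t / real n \<noteq> 0"
        unfolding eventually_sequentially using False by (intro exI[of _ 1]) auto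
    qed
    have qn: "(\<lambda>n. norm (S (0 + t / real n) - S 0 - (t / real n) *\<^sub>R D) / norm (t / real n)) \<longlonglongrightarrow> 0"
      by (rule filterlim_compose[OF q hn])
    have "(\<lambda>n. \<bar>t\<bar> * (norm (S (0 + t / real n) - S 0 - (t / real n) *\<^sub>R D) / norm (t / real n))) \<longlonglongrightarrow> \<bar>t\<bar> * 0"
      by (intro tendsto_mult tendsto_const qn)
    then have b0: "(\<lambda>n. \<bar>t\<bar> * (norm (S (0 + t / real n) - S 0 - (t / real n) *\<^sub>R D) / norm (t / real n))) \<longlonglongrightarrow> 0"
      by simp
    have ev: "\<forall>\<^sub>F n in sequentially. norm (real n *\<^sub>R (S (t / real n) - ident Th X) - t *\<^sub>R D)
        \<le> \<bar>t\<bar> * (norm (S (0 + t / real n) - S 0 - (t / real n) *\<^sub>R D) / norm (t / real n))"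
      unfolding eventually_sequentially
    proof (intro exI[of _ 1] allI impI)
      fix n :: nat assume "1 \<le> n"
      then have n: "real n > 0" by simp
      define Xv where "Xv = S (0 + t / real n) - S 0 - (t / real n) *\<^sub>R D"
      have e: "\<bar>t\<bar> / norm (t / real n) = real n" using n False by (simp add: abs_divide)
      have "real n *\<^sub>R (S (t / real n) - ident Th X) - t *\<^sub>R D = real n *\<^sub>R Xv"
        using n S0 unfolding Xv_def by (simp add: scaleR_diff_right)
      then have "norm (real n *\<^sub>R (S (t / real n) - ident Th X) - t *\<^sub>R D) = real n * norm Xv"
        using n by simp
      also have "real n * norm Xv = \<bar>t\<bar> / norm (t / real n) * norm Xv"
        by (simp only: e)
      also have "\<bar>t\<bar> / norm (t / real n) * norm Xv = \<bar>t\<bar> * (norm Xv / norm (t / real n))"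
        by (simp only: times_divide_eq_right times_divide_eq_left)
      finally show "norm (real n *\<^sub>R (S (t / real n) - ident Th X) - t *\<^sub>R D)
        \<le> \<bar>t\<bar> * (norm (S (0 + t / real n) - S 0 - (t / real n) *\<^sub>R D) / norm (t / real n))"
        unfolding Xv_def by (rule eq_refl)
    qed
    have "(\<lambda>n. real n *\<^sub>R (S (t / real n) - ident Th X) - t *\<^sub>R D) \<longlonglongrightarrow> 0"
      by (rule Lim_null_comparison[OF ev b0])
    then show ?thesis by (rule LIM_zero_cancel)
  qed
  have Clim: "(\<lambda>n. real n *\<^sub>R (\<Phi> (S (t / real n)) - ident Th A)) \<longlonglongrightarrow> t *\<^sub>R G" for t
  proof -
    have "(\<lambda>n. \<Phi> (real n *\<^sub>R (S (t / real n) - ident Th X))) \<longlonglongrightarrow> \<Phi> (t *\<^sub>R D)"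
    proof (rule sub_tendsto[OF Slim, where V = "W X" and K = K\<Phi>])
      show "\<forall>\<^sub>F n in sequentially. real n *\<^sub>R (S (t / real n) - ident Th X) \<in> W X"
        by (rule always_eventually) (intro allI W_scale W_diff SW e_W)
      show "t *\<^sub>R D \<in> W X" by (rule W_scale[OF D(1)])
      show "\<And>v w. v \<in> W X \<Longrightarrow> w \<in> W X \<Longrightarrow> \<Phi> v - \<Phi> w = \<Phi> (v - w)" by (simp add: linear_diff[OF lin\<Phi>])
      show "\<And>v. v \<in> W X \<Longrightarrow> norm (\<Phi> v) \<le> K\<Phi> * norm v" by (rule K\<Phi>)
      show "subspace (W X)" by (rule W_subspace)
    qed
    moreover have "\<Phi> (real n *\<^sub>R (S (t / real n) - ident Th X)) = real n *\<^sub>R (\<Phi> (S (t / real n)) - ident Th A)" for n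
      using \<Phi>e by (simp add: linear_scale[OF lin\<Phi>] linear_diff[OF lin\<Phi>])
    moreover have "\<Phi> (t *\<^sub>R D) = t *\<^sub>R G" unfolding G_def by (simp add: linear_scale[OF lin\<Phi>])
    ultimately show ?thesis by simp
  qed
  have Ulim: "(\<lambda>n. opow Th A (\<Phi> (S (t / real n))) n) \<longlonglongrightarrow> U t" for t
    unfolding U_def by (rule key[OF W_scale[OF GW] transf_W[OF CT] Clim])
  have UT: "U t \<in> transf Th A A" for t
    by (rule closed_sequentially[OF ax_closed _ Ulim]) (intro pw_transf CT)
  have Uadd: "U (s + t) = seq Th (U s) (U t)" for s t unfolding U_def by (rule exp_add[OF GW])
  have U0: "U 0 = ident Th A" unfolding U_def using exp_zero by simp
  have Urev: "U t \<in> rev_group Th A" for t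
    unfolding rev_group_def
  proof (intro CollectI conjI bexI[of _ "U (- t)"])
    show "U t \<in> transf Th A A" "U (- t) \<in> transf Th A A" by (rule UT)+
    show "seq Th (U (- t)) (U t) = ident Th A" using Uadd[of "- t" t] U0 by simp
    show "seq Th (U t) (U (- t)) = ident Th A" using Uadd[of t "- t"] U0 by simp
  qed
  have Ucont: "continuous_on UNIV U" unfolding U_def by (rule exp_cont[OF GW])
  show ?thesis
  proof (intro exI[of _ U] conjI allI)
    show "(\<lambda>n. opow Th A (collision_channel Th A S u \<sigma> (t / real n)) n) \<longlonglongrightarrow> U t" for t
      unfolding C_eq by (rule Ulim)
    show "one_param_subgroup Th A U" unfolding one_param_subgroup_def using Urev Uadd Ucont by blast
    show "U t = opt_exp Th A (t *\<^sub>R collision_generator Th A S u \<sigma>)" for t unfolding G_eq U_def ..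
  qed
qed


end
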